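(* Let $n\in\{2,3,\ldots\}$ and let $X_n$ be the minimal clade size in the Bolthausen-Sznitman $n$-coalescent. For $m\in\mathbb{N}$ let $A^{(m)}_i$ be the number of tables with exactly $i$ customers in a $CRP(m)$ and $K_m=\sum_{i=1}^m A^{(m)}_i$ the number of occupied tables; set $K_0=0$. Then for $j\in\{1,\ldots,n-1\}$: (a) With $\Gamma_n=\{(a_1,\ldots,a_{n-1})\in\{0,\ldots,n-1\}^{n-1}:\sum_{i=1}^{n-1} i a_i=n-1\}$, $$P(X_n=j+1)=E\left(\frac{A^{(n-1)}_j}{K_{n-1}}\right)=\sum_{(a_1,\ldots,a_{n-1})\in\Gamma_n}\frac{a_j}{\sum_{i=1}^{n-1}a_i}\prod_{i=1}^{n-1}\frac{1}{a_i!\,i^{a_i}}.$$ (b) With $\Delta(m,k)=\{(n_1,\ldots,n_k)\in\{1,\ldots,m\}^k:\sum_{i=1}^k n_i=m\}$ for $k\le m$, for $j<n-1$ $$P(X_n=j+1)=\frac1j\sum_{k=1}^{n-1-j}\frac{1}{(k+1)!}\sum_{(n_1,\ldots,n_k)\in\Delta(n-1-j,k)}\frac{1}{n_1\cdots n_k},$$ and $P(X_n=n)=\frac{1}{n-1}$. (c) Let $B_1,B_2,\ldots$ be independent Bernoulli random variables with $P(B_i=1)=1/i$. Then $$P(X_n=j+1)=\frac1j E\left(\frac{1}{1+K_{n-1-j}}\right)=\frac1j E\left(\frac{1}{1+\sum_{i=1}^{n-1-j}B_i}\right).$$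
   Context: The Bolthausen-Sznitman $n$-coalescent $(\Pi^{(n)}_t)_{t\ge0}$ is the continuous-time Markov process on partitions of $[n]=\{1,\ldots,n\}$, started from singletons, whose only transitions are mergers of several blocks into one: when there are $b$ blocks, each given $k$-tuple of blocks ($2\le k\le b$) merges at rate $\frac{(k-2)!(b-k)!}{(b-1)!}$. For a partition $\eta$ let $C_i(\eta)$ be the block containing $i$. Let $I$ be uniform on $[n]$ independent of the coalescent, $E_n=\inf\{t\ge0:C_I(\Pi^{(n)}_t)\ne\{I\}\}$, and the minimal clade size $X_n=|C_I(\Pi^{(n)}_{E_n})|$. The standard Chinese restaurant process $CRP(m)$ with $m$ customers: customer 1 sits at table 1; after $i-1$ customers are seated, customer $i$ chooses uniformly among the $i$ options of sitting directly to the left of one of the $i-1$ seated customers or at a new table. *)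

theory Defs
  imports "HOL-Probability.Probability"
begin

text \<open>Rate at which a given k-tuple of blocks merges when there are b blocks.\<close>
definition bs_rate :: "nat \<Rightarrow> nat \<Rightarrow> real" where
  "bs_rate b k = fact (k - 2) * fact (b - k) / fact (b - 1)"

definition mergers :: "nat set set \<Rightarrow> nat set set set" where
  "mergers P = {S. S \<subseteq> P \<and> 2 \<le> card S}"

definition total_rate :: "nat set set \<Rightarrow> real" where
  "total_rate P = (\<Sum>S\<in>mergers P. bs_rate (card P) (card S))"

text \<open>Embedded jump chain of the coalescent.  clade_prob f i P k is the
  probability, starting from partition P (in which i is a singleton), that the block
  containing i at the first jump involving i has exactly k elements; f is fuel
  (number of jumps allowed, n suffices when starting with n blocks).\<close>
primrec clade_prob :: "nat \<Rightarrow> nat \<Rightarrow> nat set set \<Rightarrow> nat \<Rightarrow> real" where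
  "clade_prob 0 i P k = 0"
| "clade_prob (Suc f) i P k =
     (\<Sum>S\<in>mergers P. bs_rate (card P) (card S) / total_rate P *
        (if {i} \<in> S then (if card (\<Union>S) = k then 1 else 0)
         else clade_prob f i ((P - S) \<union> {\<Union>S}) k))"

text \<open>P(X_n = k), with I uniform on [n] independent of the coalescent.\<close>
definition minclade_prob :: "nat \<Rightarrow> nat \<Rightarrow> real" where
  "minclade_prob n k =
     (\<Sum>i\<in>{1..n}. clade_prob n i ((\<lambda>x. {x}) ` {1..n}) k) / real n"

text \<open>A seating is encoded by sigma: sigma c is the customer sitting directly to the
  right of c (cyclically at its table); sigma is the identity outside seated customers.\<close>
definition sit_left :: "(nat \<Rightarrow> nat) \<Rightarrow> nat \<Rightarrow> nat \<Rightarrow> nat \<Rightarrow> nat" where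
  "sit_left \<sigma> x c = (\<lambda>y. if y = x then c else if \<sigma> y = c then x else \<sigma> y)"

primrec crp :: "nat \<Rightarrow> (nat \<Rightarrow> nat) pmf" where
  "crp 0 = return_pmf id"
| "crp (Suc m) =
     crp m \<bind> (\<lambda>\<sigma>. pmf_of_set {1..Suc m} \<bind>
        (\<lambda>c. return_pmf (if c = Suc m then \<sigma> else sit_left \<sigma> (Suc m) c)))"

definition crp_table :: "(nat \<Rightarrow> nat) \<Rightarrow> nat \<Rightarrow> nat set" where
  "crp_table \<sigma> c = {(\<sigma> ^^ k) c | k. True}"

definition crp_tables :: "nat \<Rightarrow> (nat \<Rightarrow> nat) \<Rightarrow> nat set set" where
  "crp_tables m \<sigma> = crp_table \<sigma> ` {1..m}"

definition crp_A :: "nat \<Rightarrow> nat \<Rightarrow> (nat \<Rightarrow> nat) \<Rightarrow> nat" where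
  "crp_A m i \<sigma> = card {T \<in> crp_tables m \<sigma>. card T = i}"

definition crp_K :: "nat \<Rightarrow> (nat \<Rightarrow> nat) \<Rightarrow> nat" where
  "crp_K m \<sigma> = card (crp_tables m \<sigma>)"

definition Gamma_set :: "nat \<Rightarrow> (nat \<Rightarrow> nat) set" where
  "Gamma_set n = {a \<in> {1..n-1} \<rightarrow>\<^sub>E {0..n-1}. (\<Sum>i=1..n-1. i * a i) = n - 1}"

definition Delta_set :: "nat \<Rightarrow> nat \<Rightarrow> (nat \<Rightarrow> nat) set" where
  "Delta_set m k = {v \<in> {1..k} \<rightarrow>\<^sub>E {1..m}. (\<Sum>i=1..k. v i) = m}"

definition bern_seq :: "nat \<Rightarrow> (nat \<Rightarrow> bool) pmf" where
  "bern_seq m = Pi_pmf {1..m} False (\<lambda>i. bernoulli_pmf (1 / real i))"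

end

theory Submission
  imports Defs "HOL-Combinatorics.Orbits"
begin


fun uu :: "nat \<Rightarrow> nat \<Rightarrow> real" where
  "uu 0 k = (if k = 0 then 1 else 0)"
| "uu (Suc m) k = (real m * uu m k + (if k = 0 then 0 else uu m (k - 1))) / real (Suc m)"

definition up :: "nat \<Rightarrow> nat \<Rightarrow> real" where
  "up m k = (if k = 0 then 0 else uu m (k - 1))"

lemma uu_rec: "real (Suc m) * uu (Suc m) k = real m * uu m k + up m k"
  by (simp add: up_def)

lemma up_rec: "real (Suc m) * up (Suc m) k = real m * up m k + up m (k - 1)"
  by (cases k) (auto simp: up_def uu_rec)

lemma uu_zero: "m < k \<Longrightarrow> uu m k = 0"
  by (induction m arbitrary: k) auto

lemma uu_sum: "(\<Sum>k=0..m. uu m k) = 1"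
proof (induction m)
  case 0 then show ?case by simp
next
  case (Suc m)
  have "(\<Sum>k=0..Suc m. uu (Suc m) k) = (\<Sum>k=0..Suc m. (real m * uu m k + up m k)) / real (Suc m)"
    unfolding uu.simps up_def by (simp only: sum_divide_distrib)
  also have "(\<Sum>k=0..Suc m. (real m * uu m k + up m k)) = real m * (\<Sum>k=0..Suc m. uu m k) + (\<Sum>k=0..Suc m. up m k)"
    by (simp add: sum.distrib sum_distrib_left distrib_left)
  also have "(\<Sum>k=0..Suc m. uu m k) = 1" using Suc by (simp add: uu_zero)
  also have "(\<Sum>k=0..Suc m. up m k) = (\<Sum>k=0..m. uu m k)"
    by (subst sum.atLeast0_atMost_Suc_shift) (simp add: up_def)
  finally show ?case using Suc by simp
qed

lemma uu_deriv: "real k * uu m k = (\<Sum>r=1..m. up (m - r) k / real r)"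
proof (induction m arbitrary: k)
  case 0 then show ?case by (simp add: uu_zero)
next
  case (Suc m)
  show ?case
  proof (cases k)
    case 0 then show ?thesis by (simp add: up_def)
  next
    case (Suc k')
    have IH1: "real k * uu m k = (\<Sum>r=1..m. up (m - r) k / real r)" using Suc.IH .
    have IH2: "real k' * uu m k' = (\<Sum>r=1..m. up (m - r) k' / real r)" using Suc.IH .
    have kup: "real k * up m k = (\<Sum>r=1..m. up (m - r) k' / real r) + up m k"
      using IH2 Suc by (simp add: up_def algebra_simps)
    have "real (Suc m) * (real k * uu (Suc m) k) = real k * (real m * uu m k + up m k)"
      by (subst mult.left_commute, subst uu_rec) simp
    also have "\<dots> = real m * (\<Sum>r=1..m. up (m - r) k / real r) + (\<Sum>r=1..m. up (m - r) k' / real r) + up m k"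
      using IH1 kup by (simp add: algebra_simps)
    also have "\<dots> = real (Suc m) * (\<Sum>r=1..Suc m. up (Suc m - r) k / real r)"
    proof -
      have e1: "\<And>r. r \<in> {1..m} \<Longrightarrow> real (Suc m - r) * up (Suc m - r) k = real (m - r) * up (m - r) k + up (m - r) k'"
      proof -
        fix r assume "r \<in> {1..m}"
        then have "Suc m - r = Suc (m - r)" by auto
        then show "real (Suc m - r) * up (Suc m - r) k = real (m - r) * up (m - r) k + up (m - r) k'"
          using up_rec[of "m - r" k] Suc by simp
      qed
      have "real (Suc m) * (\<Sum>r=1..Suc m. up (Suc m - r) k / real r)
          = (\<Sum>r=1..Suc m. (real (Suc m - r) * up (Suc m - r) k) / real r) + (\<Sum>r=1..Suc m. up (Suc m - r) k)"
        by (simp add: sum_distrib_left sum.distrib[symmetric] field_simps of_nat_diff)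
      also have "(\<Sum>r=1..Suc m. (real (Suc m - r) * up (Suc m - r) k) / real r)
          = (\<Sum>r=1..m. (real (Suc m - r) * up (Suc m - r) k) / real r)"
        by simp
      also have "\<dots> = (\<Sum>r=1..m. (real (m - r) * up (m - r) k) / real r) + (\<Sum>r=1..m. up (m - r) k' / real r)"
      proof -
        have "(\<Sum>r=1..m. (real (Suc m - r) * up (Suc m - r) k) / real r)
           = (\<Sum>r=1..m. (real (m - r) * up (m - r) k + up (m - r) k') / real r)"
          by (intro sum.cong refl) (simp only: e1)
        then show ?thesis by (simp add: sum.distrib[symmetric] add_divide_distrib)
      qed
      also have "(\<Sum>r=1..m. (real (m - r) * up (m - r) k) / real r)
          = real m * (\<Sum>r=1..m. up (m - r) k / real r) - (\<Sum>r=1..m. up (m - r) k)"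
        by (simp add: sum_distrib_left sum_subtractf[symmetric] field_simps of_nat_diff)
      also have "(\<Sum>r=1..Suc m. up (Suc m - r) k) = (\<Sum>r=1..m. up (m - r) k) + up m k"
      proof -
        have "(\<Sum>r=1..Suc m. up (Suc m - r) k) = (\<Sum>r=0..m. up (m - r) k)"
          unfolding One_nat_def sum.shift_bounds_cl_Suc_ivl by simp
        also have "\<dots> = up m k + (\<Sum>r=1..m. up (m - r) k)"
          by (simp add: sum.atLeast_Suc_atMost)
        finally show ?thesis by simp
      qed
      finally show ?thesis by simp
    qed
    finally show ?thesis by simp
  qed
qed

lemma uu_sum_ext: "s \<le> N \<Longrightarrow> (\<Sum>k=0..N. uu s k * g k) = (\<Sum>k=0..s. uu s k * g k)"
  by (rule sum.mono_neutral_right) (auto simp: uu_zero)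

lemma sbp:
  fixes x :: "nat \<Rightarrow> real"
  assumes x0: "x 0 = 0"
  shows "(\<Sum>r=1..m. (x (Suc m - r) - x (m - r)) / real r) = x m - (\<Sum>r=2..m. x (Suc m - r) / (real r * (real r - 1)))"
proof (cases m)
  case 0 then show ?thesis by (simp add: x0)
next
  case (Suc m')
  have S1: "(\<Sum>r=1..m. x (Suc m - r) / real r) = x m + (\<Sum>r=2..m. x (Suc m - r) / real r)"
    using Suc by (simp add: sum.atLeast_Suc_atMost numeral_2_eq_2)
  have "(\<Sum>r=1..m. x (m - r) / real r) = (\<Sum>r=2..Suc m. x (Suc m - r) / (real r - 1))"
    unfolding numeral_2_eq_2 sum.shift_bounds_cl_Suc_ivl by simp
  also have "\<dots> = (\<Sum>r=2..m. x (Suc m - r) / (real r - 1))"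
    using Suc by (simp add: x0)
  finally have S2: "(\<Sum>r=1..m. x (m - r) / real r) = (\<Sum>r=2..m. x (Suc m - r) / (real r - 1))" .
  have S3: "(\<Sum>r=2..m. x (Suc m - r) / real r) - (\<Sum>r=2..m. x (Suc m - r) / (real r - 1))
      = - (\<Sum>r=2..m. x (Suc m - r) / (real r * (real r - 1)))"
  proof -
    have "\<And>r. r \<in> {2..m} \<Longrightarrow> x (Suc m - r) / real r - x (Suc m - r) / (real r - 1) = - (x (Suc m - r) / (real r * (real r - 1)))"
    proof -
      fix r :: nat assume "r \<in> {2..m}"
      then have "real r \<ge> 2" by auto
      then show "x (Suc m - r) / real r - x (Suc m - r) / (real r - 1) = - (x (Suc m - r) / (real r * (real r - 1)))"
        by (simp add: field_simps)
    qed
    then show ?thesis by (simp add: sum_subtractf[symmetric] sum_negf[symmetric])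
  qed
  show ?thesis
    using S1 S2 S3 by (simp add: diff_divide_distrib sum_subtractf)
qed

lemma uu_star: "(real m - real k) * uu m k = (\<Sum>r=2..m. real (Suc m - r) * uu (Suc m - r) k / (real r * (real r - 1)))"
proof -
  define x where "x s = real s * uu s k" for s
  have d: "\<And>s. x (Suc s) - x s = up s k" unfolding x_def using uu_rec by (simp add: algebra_simps)
  have "(\<Sum>r=1..m. (x (Suc m - r) - x (m - r)) / real r) = (\<Sum>r=1..m. up (m - r) k / real r)"
  proof (intro sum.cong refl)
    fix r assume "r \<in> {1..m}"
    then have "Suc m - r = Suc (m - r)" by auto
    then show "(x (Suc m - r) - x (m - r)) / real r = up (m - r) k / real r" by (simp add: d)
  qed
  also have "\<dots> = real k * uu m k" by (simp add: uu_deriv)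
  finally have "real k * uu m k = x m - (\<Sum>r=2..m. x (Suc m - r) / (real r * (real r - 1)))"
    using sbp[of x m] by (simp add: x_def)
  then show ?thesis by (simp add: x_def algebra_simps)
qed

definition ff :: "nat \<Rightarrow> real" where
  "ff m = (\<Sum>k=0..m. uu m k / real (Suc k))"

lemma ff_rec: "real (Suc m) * ff m = 1 + (\<Sum>r=2..m. real (Suc m - r) * ff (Suc m - r) / (real r * (real r - 1)))"
proof -
  have "real (Suc m) * ff m = (\<Sum>k=0..m. (real m - real k) * uu m k / real (Suc k)) + (\<Sum>k=0..m. uu m k)"
    unfolding ff_def sum_distrib_left sum.distrib[symmetric]
    by (intro sum.cong refl) (simp add: field_simps)
  also have "(\<Sum>k=0..m. uu m k) = 1" by (rule uu_sum)
  also have "(\<Sum>k=0..m. (real m - real k) * uu m k / real (Suc k))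
     = (\<Sum>k=0..m. \<Sum>r=2..m. real (Suc m - r) * uu (Suc m - r) k / (real r * (real r - 1)) / real (Suc k))"
    by (simp add: uu_star sum_divide_distrib)
  also have "\<dots> = (\<Sum>r=2..m. \<Sum>k=0..m. real (Suc m - r) / (real r * (real r - 1)) * (uu (Suc m - r) k * (1 / real (Suc k))))"
    by (subst sum.swap) (simp add: field_simps)
  also have "\<dots> = (\<Sum>r=2..m. real (Suc m - r) * ff (Suc m - r) / (real r * (real r - 1)))"
  proof (intro sum.cong refl)
    fix r assume r: "r \<in> {2..m}"
    have "(\<Sum>k=0..m. uu (Suc m - r) k * (1 / real (Suc k))) = (\<Sum>k=0..Suc m - r. uu (Suc m - r) k * (1 / real (Suc k)))"
      using r by (intro uu_sum_ext) auto
    also have "\<dots> = ff (Suc m - r)" unfolding ff_def by simp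
    finally have ff1: "(\<Sum>k=0..m. uu (Suc m - r) k * (1 / real (Suc k))) = ff (Suc m - r)" .
    show "(\<Sum>k=0..m. real (Suc m - r) / (real r * (real r - 1)) * (uu (Suc m - r) k * (1 / real (Suc k))))
        = real (Suc m - r) * ff (Suc m - r) / (real r * (real r - 1))"
      unfolding sum_distrib_left[symmetric] ff1 by simp
  qed
  finally show ?thesis by simp
qed


lemma fact_minus2: "2 \<le> r \<Longrightarrow> (fact r :: real) = real r * (real r - 1) * fact (r - 2)"
proof -
  assume "2 \<le> r"
  then obtain s where "r = Suc (Suc s)" by (metis add_2_eq_Suc le_Suc_ex)
  then show ?thesis by (simp add: algebra_simps)
qed

lemma choose_fact2: "2 \<le> r \<Longrightarrow> r \<le> l \<Longrightarrow>
   real (l choose r) * fact (r - 2) * fact (l - r) = fact l / (real r * (real r - 1))"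
proof -
  assume r: "2 \<le> r" "r \<le> l"
  have a: "(fact r :: real) * fact (l - r) * real (l choose r) = fact l"
    using binomial_fact_lemma[OF r(2)] by (metis of_nat_fact of_nat_mult)
  have pos: "real r * (real r - 1) \<noteq> 0" using r by auto
  have "real r * (real r - 1) * (real (l choose r) * fact (r - 2) * fact (l - r)) = fact l"
    using a unfolding fact_minus2[OF r(1)] by (simp add: ac_simps)
  then show ?thesis using pos by (simp add: nonzero_eq_divide_eq ac_simps)
qed

lemma tele: "1 \<le> l \<Longrightarrow> (\<Sum>r=2..l. 1 / (real r * (real r - 1))) = 1 - 1 / real l"
proof (induction l)
  case 0 then show ?case by simp
next
  case (Suc l)
  show ?case
  proof (cases "l = 0")
    case True then show ?thesis by simp
  next
    case False
    then have IH: "(\<Sum>r=2..l. 1 / (real r * (real r - 1))) = 1 - 1 / real l" using Suc by simp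
    have "(\<Sum>r=2..Suc l. 1 / (real r * (real r - 1))) = (\<Sum>r=2..l. 1 / (real r * (real r - 1))) + 1 / (real (Suc l) * real l)"
      using False by (simp add: sum.cl_ivl_Suc)
    also have "\<dots> = 1 - 1 / real (Suc l)" unfolding IH using False
      by (simp add: field_simps) (smt (verit) of_nat_0_less_iff mult_pos_pos)
    finally show ?thesis .
  qed
qed

lemma total_rate_sum: "2 \<le> b \<Longrightarrow> (\<Sum>r=2..b. real (b choose r) * bs_rate b r) = real b - 1"
proof -
  assume b: "2 \<le> b"
  have "\<And>r. r \<in> {2..b} \<Longrightarrow> real (b choose r) * bs_rate b r = real b * (1 / (real r * (real r - 1)))"
  proof -
    fix r assume r: "r \<in> {2..b}"
    have "real (b choose r) * fact (r - 2) * fact (b - r) = fact b / (real r * (real r - 1))"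
      using r by (intro choose_fact2) auto
    moreover have "(fact b :: real) = real b * fact (b - 1)" using b by (simp add: fact_reduce)
    ultimately have "real (b choose r) * fact (r - 2) * fact (b - r) = real b * fact (b - 1) / (real r * (real r - 1))"
      by simp
    then have "real (b choose r) * bs_rate b r = real b * fact (b - 1) / (real r * (real r - 1)) / fact (b - 1)"
      unfolding bs_rate_def by (simp add: ac_simps)
    then show "real (b choose r) * bs_rate b r = real b * (1 / (real r * (real r - 1)))"
      by simp
  qed
  then have "(\<Sum>r=2..b. real (b choose r) * bs_rate b r) = real b * (\<Sum>r=2..b. 1 / (real r * (real r - 1)))"
    by (simp add: sum_distrib_left)
  also have "\<dots> = real b - 1" using b by (subst tele) (auto simp: field_simps)
  finally show ?thesis .
qed

definition qq :: "nat \<Rightarrow> nat \<Rightarrow> real" where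
  "qq b l = (if l = 0 then 0 else fact (l - 1) * fact (b - 1 - l) * ff (b - 1 - l) / fact (b - 1))"

lemma QI:
  "real (l + m) * qq (l + m + 1) l =
     (if l \<noteq> 0 then bs_rate (l + m + 1) (l + 1) else 0)
   + (\<Sum>r=2..l. real (l choose r) * bs_rate (l + m + 1) r * qq (l + m + 2 - r) (l + 1 - r))
   + (\<Sum>r=2..m. real (m choose r) * bs_rate (l + m + 1) r * qq (l + m + 2 - r) l)"
proof (cases "l = 0")
  case True then show ?thesis by (simp add: qq_def)
next
  case False
  define c where "c = fact (l - 1) * fact m / (fact (l + m) :: real)"
  have c2: "\<And>r. r \<in> {2..l} \<Longrightarrow> real (l choose r) * bs_rate (l + m + 1) r * qq (l + m + 2 - r) (l + 1 - r)
        = c * (real l * ff m / (real r * (real r - 1)))"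
  proof -
    fix r assume r: "r \<in> {2..l}"
    have e1: "l + m + 1 - r = Suc (l + m - r)" "l + m + 2 - r - 1 - (l + 1 - r) = m" "l + 1 - r - 1 = l - r"
      "l + m + 2 - r - 1 = Suc (l + m - r)" using r by auto
    have lr: "l + 1 - r \<noteq> 0" using r by auto
    have cf: "real (l choose r) * fact (r - 2) * fact (l - r) = fact l / (real r * (real r - 1))"
      using r by (intro choose_fact2) auto
    have fl: "(fact l :: real) = real l * fact (l - 1)" using False by (simp add: fact_reduce)
    have "real (l choose r) * bs_rate (l + m + 1) r * qq (l + m + 2 - r) (l + 1 - r)
        = (real (l choose r) * fact (r - 2) * fact (l - r)) * fact m * ff m / fact (l + m)"
      unfolding bs_rate_def qq_def using lr by (simp add: e1 del: fact_Suc)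
    also have "\<dots> = c * (real l * ff m / (real r * (real r - 1)))"
      unfolding cf c_def fl by (simp add: field_simps)
    finally show "real (l choose r) * bs_rate (l + m + 1) r * qq (l + m + 2 - r) (l + 1 - r) = c * (real l * ff m / (real r * (real r - 1)))" .
  qed
  have c3: "\<And>r. r \<in> {2..m} \<Longrightarrow> real (m choose r) * bs_rate (l + m + 1) r * qq (l + m + 2 - r) l
        = c * (real (Suc m - r) * ff (Suc m - r) / (real r * (real r - 1)))"
  proof -
    fix r assume r: "r \<in> {2..m}"
    have e1: "l + m + 1 - r = Suc (l + m - r)" "l + m + 2 - r - 1 - l = Suc (m - r)"
      "l + m + 2 - r - 1 = Suc (l + m - r)" "Suc m - r = Suc (m - r)" using r by auto
    have cf: "real (m choose r) * fact (r - 2) * fact (m - r) = fact m / (real r * (real r - 1))"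
      using r by (intro choose_fact2) auto
    have "real (m choose r) * bs_rate (l + m + 1) r * qq (l + m + 2 - r) l
        = (real (m choose r) * fact (r - 2) * fact (m - r)) * real (Suc (m - r)) * fact (l - 1) * ff (Suc (m - r)) / fact (l + m)"
      unfolding bs_rate_def qq_def using False by (simp add: e1 del: fact_Suc) (simp add: algebra_simps)
    also have "\<dots> = c * (real (Suc m - r) * ff (Suc m - r) / (real r * (real r - 1)))"
      unfolding cf c_def e1 by (simp add: field_simps)
    finally show "real (m choose r) * bs_rate (l + m + 1) r * qq (l + m + 2 - r) l
        = c * (real (Suc m - r) * ff (Suc m - r) / (real r * (real r - 1)))" .
  qed
  have s2: "(\<Sum>r=2..l. real (l choose r) * bs_rate (l + m + 1) r * qq (l + m + 2 - r) (l + 1 - r)) = c * (real l - 1) * ff m"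
  proof -
    have "(\<Sum>r=2..l. real (l choose r) * bs_rate (l + m + 1) r * qq (l + m + 2 - r) (l + 1 - r))
        = (\<Sum>r=2..l. c * (real l * ff m / (real r * (real r - 1))))"
      by (rule sum.cong[OF refl c2])
    also have "\<dots> = c * real l * ff m * (\<Sum>r=2..l. 1 / (real r * (real r - 1)))"
      by (simp add: sum_distrib_left mult.assoc)
    also have "\<dots> = c * (real l - 1) * ff m" using False by (subst tele) (auto simp: field_simps)
    finally show ?thesis .
  qed
  have s3: "(\<Sum>r=2..m. real (m choose r) * bs_rate (l + m + 1) r * qq (l + m + 2 - r) l) = c * (real (Suc m) * ff m - 1)"
  proof -
    have "(\<Sum>r=2..m. real (m choose r) * bs_rate (l + m + 1) r * qq (l + m + 2 - r) l)
       = (\<Sum>r=2..m. c * (real (Suc m - r) * ff (Suc m - r) / (real r * (real r - 1))))"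
      by (rule sum.cong[OF refl c3])
    also have "\<dots> = c * (\<Sum>r=2..m. real (Suc m - r) * ff (Suc m - r) / (real r * (real r - 1)))"
      by (simp only: sum_distrib_left)
    also have "(\<Sum>r=2..m. real (Suc m - r) * ff (Suc m - r) / (real r * (real r - 1))) = real (Suc m) * ff m - 1"
      using ff_rec[of m] by linarith
    finally show ?thesis .
  qed
  have s1: "bs_rate (l + m + 1) (l + 1) = c"
    unfolding bs_rate_def c_def using False by simp
  have lhs: "real (l + m) * qq (l + m + 1) l = c * real (l + m) * ff m"
    unfolding qq_def c_def using False by simp
  show ?thesis using False unfolding lhs s1 s2 s3 by (simp add: algebra_simps)
qed


lemma sum_subsets_card:
  fixes \<phi> :: "nat \<Rightarrow> real"
  assumes A: "finite A"
  shows "(\<Sum>S\<in>{S. S \<subseteq> A \<and> 2 \<le> card S}. \<phi> (card S)) = (\<Sum>r=2..card A. real (card A choose r) * \<phi> r)"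
proof -
  let ?M = "{S. S \<subseteq> A \<and> 2 \<le> card S}"
  have fM: "finite ?M" by (rule finite_subset[of _ "Pow A"]) (auto simp: A)
  have im: "card ` ?M \<subseteq> {2..card A}" using A by (auto intro: card_mono)
  have "(\<Sum>S\<in>?M. \<phi> (card S)) = (\<Sum>r\<in>{2..card A}. \<Sum>S\<in>{S \<in> ?M. card S = r}. \<phi> (card S))"
    by (rule sum.group[OF fM finite_atLeastAtMost im, symmetric])
  also have "\<dots> = (\<Sum>r=2..card A. real (card A choose r) * \<phi> r)"
  proof (intro sum.cong refl)
    fix r assume r: "r \<in> {2..card A}"
    have e: "{S \<in> ?M. card S = r} = {S. S \<subseteq> A \<and> card S = r}" using r by auto
    show "(\<Sum>S\<in>{S \<in> ?M. card S = r}. \<phi> (card S)) = real (card A choose r) * \<phi> r"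
      unfolding e using n_subsets[OF A, of r] by simp
  qed
  finally show ?thesis .
qed

lemma QI_sub:
  assumes Q: "finite Q" and L: "L \<subseteq> Q"
  shows "real (card Q) * qq (card Q + 1) (card L) =
     (if L \<noteq> {} then bs_rate (card Q + 1) (card L + 1) else 0)
   + (\<Sum>S\<in>{S. S \<subseteq> L \<and> 2 \<le> card S}. bs_rate (card Q + 1) (card S) * qq (card Q + 2 - card S) (card L + 1 - card S))
   + (\<Sum>S\<in>{S. S \<subseteq> Q - L \<and> 2 \<le> card S}. bs_rate (card Q + 1) (card S) * qq (card Q + 2 - card S) (card L))"
proof -
  have fL: "finite L" using Q L by (rule finite_subset[rotated])
  define l where "l = card L"
  define m where "m = card Q - card L"
  have lm: "card Q = l + m" unfolding l_def m_def using card_mono[OF Q L] by simp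
  have cd: "card (Q - L) = m" unfolding m_def using card_Diff_subset[OF fL L] .
  have Le: "(L \<noteq> {}) = (l \<noteq> 0)" unfolding l_def using fL by simp
  have "(\<Sum>S\<in>{S. S \<subseteq> L \<and> 2 \<le> card S}. bs_rate (card Q + 1) (card S) * qq (card Q + 2 - card S) (card L + 1 - card S))
      = (\<Sum>r=2..l. real (l choose r) * (bs_rate (l + m + 1) r * qq (l + m + 2 - r) (l + 1 - r)))"
    unfolding l_def lm[unfolded l_def] by (rule sum_subsets_card[OF fL])
  moreover have "(\<Sum>S\<in>{S. S \<subseteq> Q - L \<and> 2 \<le> card S}. bs_rate (card Q + 1) (card S) * qq (card Q + 2 - card S) (card L))
      = (\<Sum>r=2..m. real (m choose r) * (bs_rate (l + m + 1) r * qq (l + m + 2 - r) l))"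
    unfolding cd[symmetric] lm l_def using sum_subsets_card[of "Q - L"] Q by simp
  ultimately show ?thesis using QI[of l m] Le unfolding lm l_def[symmetric]
    by (simp add: mult.assoc)
qed

definition goodP :: "nat \<Rightarrow> nat set set \<Rightarrow> bool" where
  "goodP i P \<longleftrightarrow> finite P \<and> {i} \<in> P \<and> (\<forall>B\<in>P. B \<noteq> {}) \<and> (\<forall>A\<in>P. \<forall>B\<in>P. A \<noteq> B \<longrightarrow> A \<inter> B = {})"

definition hh :: "nat \<Rightarrow> nat \<Rightarrow> nat set set \<Rightarrow> real" where
  "hh i k L = (if card (\<Union>(insert {i} L)) = k then 1 else 0)"

definition RR :: "nat \<Rightarrow> nat \<Rightarrow> nat set set \<Rightarrow> real" where
  "RR i k P = (\<Sum>L\<in>Pow (P - {{i}}). qq (card P) (card L) * hh i k L)"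

lemma merge_props:
  assumes g: "goodP i P" and S: "S \<subseteq> P - {{i}}" and cS: "2 \<le> card S"
  shows "goodP i ((P - S) \<union> {\<Union>S})" "\<Union>S \<notin> P" "\<Union>S \<noteq> {i}"
    "(P - S) \<union> {\<Union>S} - {{i}} = insert (\<Union>S) ((P - {{i}}) - S)"
    "card ((P - S) \<union> {\<Union>S}) = card P + 1 - card S"
proof -
  have fP: "finite P" and iP: "{i} \<in> P" and ne: "\<forall>B\<in>P. B \<noteq> {}"
    and dj: "\<forall>A\<in>P. \<forall>B\<in>P. A \<noteq> B \<longrightarrow> A \<inter> B = {}" using g unfolding goodP_def by auto
  have djr: "\<And>A B. A \<in> P \<Longrightarrow> B \<in> P \<Longrightarrow> A \<noteq> B \<Longrightarrow> A \<inter> B = {}" using dj by auto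
  have fS: "finite S" using fP S by (meson finite_Diff finite_subset)
  obtain A1 A2 where A: "A1 \<in> S" "A2 \<in> S" "A1 \<noteq> A2"
    using cS card_le_Suc0_iff_eq[OF fS] by fastforce
  have A1ne: "A1 \<noteq> {}" "A2 \<noteq> {}" using A S ne by auto
  have A12: "A1 \<inter> A2 = {}" using A S dj by auto
  show notin: "\<Union>S \<notin> P"
  proof
    assume U: "\<Union>S \<in> P"
    have "A1 \<noteq> \<Union>S \<or> A2 \<noteq> \<Union>S" using A by auto
    then show False
    proof
      assume a: "A1 \<noteq> \<Union>S"
      have "A1 \<in> P" using A S by auto
      then have "A1 \<inter> \<Union>S = {}" using djr U a by auto
      moreover have "A1 \<subseteq> \<Union>S" using A by auto
      ultimately show False using A1ne by auto
    next
      assume a: "A2 \<noteq> \<Union>S"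
      have "A2 \<in> P" using A S by auto
      then have "A2 \<inter> \<Union>S = {}" using djr U a by auto
      moreover have "A2 \<subseteq> \<Union>S" using A by auto
      ultimately show False using A1ne by auto
    qed
  qed
  show neq: "\<Union>S \<noteq> {i}" using notin iP by auto
  show "(P - S) \<union> {\<Union>S} - {{i}} = insert (\<Union>S) ((P - {{i}}) - S)" using neq by auto
  have cd: "card (P - S) = card P - card S" using S fS by (intro card_Diff_subset) auto
  have cle: "card S \<le> card P" using S fP by (intro card_mono) auto
  show "card ((P - S) \<union> {\<Union>S}) = card P + 1 - card S"
    using notin fP cd cle by simp
  show "goodP i ((P - S) \<union> {\<Union>S})"
    unfolding goodP_def
  proof (intro conjI ballI impI)
    show "finite (P - S \<union> {\<Union> S})" using fP by simp
    show "{i} \<in> P - S \<union> {\<Union> S}" using iP S by auto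
    fix B assume "B \<in> P - S \<union> {\<Union> S}"
    then show "B \<noteq> {}" using ne A A1ne by auto
  next
    fix B C assume B: "B \<in> P - S \<union> {\<Union> S}" and C: "C \<in> P - S \<union> {\<Union> S}" and BC: "B \<noteq> C"
    show "B \<inter> C = {}"
    proof (cases "B = \<Union>S")
      case True
      then have C': "C \<in> P - S" using C BC by auto
      have "\<forall>A\<in>S. A \<inter> C = {}"
      proof
        fix A assume "A \<in> S"
        then have "A \<in> P" "A \<noteq> C" using S C' by auto
        then show "A \<inter> C = {}" using djr C' by auto
      qed
      then show ?thesis using True by auto
    next
      case False
      then have B': "B \<in> P - S" using B by auto
      show ?thesis
      proof (cases "C = \<Union>S")
        case True
        have "\<forall>A\<in>S. B \<inter> A = {}"
        proof
          fix A assume "A \<in> S"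
          then have "A \<in> P" "A \<noteq> B" using S B' by auto
          then show "B \<inter> A = {}" using djr B' by auto
        qed
        then show ?thesis using True by auto
      next
        case False then have "C \<in> P - S" using C by auto
        then show ?thesis using B' dj BC by auto
      qed
    qed
  qed
qed

lemma sum_Pow_insert:
  fixes g :: "'a set \<Rightarrow> real"
  assumes "finite A" "a \<notin> A"
  shows "(\<Sum>L\<in>Pow (insert a A). g L) = (\<Sum>L\<in>Pow A. g L) + (\<Sum>L\<in>Pow A. g (insert a L))"
proof -
  have d: "Pow A \<inter> insert a ` Pow A = {}" using assms by auto
  have inj: "inj_on (insert a) (Pow A)" using assms unfolding inj_on_def by (metis PowD Diff_insert_absorb subsetD)
  have "(\<Sum>L\<in>Pow (insert a A). g L) = (\<Sum>L\<in>Pow A \<union> insert a ` Pow A. g L)"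
    by (simp add: Pow_insert)
  also have "\<dots> = (\<Sum>L\<in>Pow A. g L) + (\<Sum>L\<in>insert a ` Pow A. g L)"
    using assms d by (intro sum.union_disjoint) auto
  also have "(\<Sum>L\<in>insert a ` Pow A. g L) = (\<Sum>L\<in>Pow A. g (insert a L))"
    using inj by (simp add: sum.reindex)
  finally show ?thesis .
qed

lemma SW1:
  fixes F :: "'a set \<Rightarrow> 'a set \<Rightarrow> real"
  assumes Q: "finite Q"
  shows "(\<Sum>L\<in>Pow Q. \<Sum>S\<in>{S. S \<subseteq> L \<and> 2 \<le> card S}. F S L)
       = (\<Sum>S\<in>{S. S \<subseteq> Q \<and> 2 \<le> card S}. \<Sum>L0\<in>Pow (Q - S). F S (S \<union> L0))"
proof -
  let ?M = "{S. S \<subseteq> Q \<and> 2 \<le> card S}"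
  have fM: "finite ?M" by (rule finite_subset[of _ "Pow Q"]) (auto simp: Q)
  have "(\<Sum>L\<in>Pow Q. \<Sum>S\<in>{S. S \<subseteq> L \<and> 2 \<le> card S}. F S L)
      = (\<Sum>L\<in>Pow Q. \<Sum>S\<in>{S \<in> ?M. S \<subseteq> L}. F S L)"
    by (intro sum.cong refl) auto
  also have "\<dots> = (\<Sum>S\<in>?M. \<Sum>L\<in>{L \<in> Pow Q. S \<subseteq> L}. F S L)"
    using sum.swap_restrict[of "Pow Q" ?M "\<lambda>L S. F S L" "\<lambda>L S. S \<subseteq> L"] Q fM by simp
  also have "\<dots> = (\<Sum>S\<in>?M. \<Sum>L0\<in>Pow (Q - S). F S (S \<union> L0))"
  proof (rule sum.cong[OF refl])
    fix S assume S: "S \<in> ?M"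
    have e: "{L \<in> Pow Q. S \<subseteq> L} = (\<lambda>L0. S \<union> L0) ` Pow (Q - S)" using S by auto
    have inj: "inj_on (\<lambda>L0. S \<union> L0) (Pow (Q - S))" unfolding inj_on_def by auto
    show "(\<Sum>L\<in>{L \<in> Pow Q. S \<subseteq> L}. F S L) = (\<Sum>L0\<in>Pow (Q - S). F S (S \<union> L0))"
      unfolding e using inj by (simp add: sum.reindex)
  qed
  finally show ?thesis .
qed

lemma SW2:
  fixes F :: "'a set \<Rightarrow> 'a set \<Rightarrow> real"
  assumes Q: "finite Q"
  shows "(\<Sum>L\<in>Pow Q. \<Sum>S\<in>{S. S \<subseteq> Q - L \<and> 2 \<le> card S}. F S L)
       = (\<Sum>S\<in>{S. S \<subseteq> Q \<and> 2 \<le> card S}. \<Sum>L\<in>Pow (Q - S). F S L)"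
proof -
  let ?M = "{S. S \<subseteq> Q \<and> 2 \<le> card S}"
  have fM: "finite ?M" by (rule finite_subset[of _ "Pow Q"]) (auto simp: Q)
  have "(\<Sum>L\<in>Pow Q. \<Sum>S\<in>{S. S \<subseteq> Q - L \<and> 2 \<le> card S}. F S L)
      = (\<Sum>L\<in>Pow Q. \<Sum>S\<in>{S \<in> ?M. S \<inter> L = {}}. F S L)"
    by (intro sum.cong refl) auto
  also have "\<dots> = (\<Sum>S\<in>?M. \<Sum>L\<in>{L \<in> Pow Q. S \<inter> L = {}}. F S L)"
    using sum.swap_restrict[of "Pow Q" ?M "\<lambda>L S. F S L" "\<lambda>L S. S \<inter> L = {}"] Q fM by simp
  also have "\<dots> = (\<Sum>S\<in>?M. \<Sum>L\<in>Pow (Q - S). F S L)"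
    by (intro sum.cong refl) auto
  finally show ?thesis .
qed


lemma mergers_eq: "mergers P = {S. S \<subseteq> P \<and> 2 \<le> card S}"
  unfolding mergers_def by simp

lemma total_rate_eq: "finite P \<Longrightarrow> 2 \<le> card P \<Longrightarrow> total_rate P = real (card P) - 1"
  unfolding total_rate_def mergers_eq
  by (subst sum_subsets_card[where \<phi>="bs_rate (card P)"]) (auto simp: total_rate_sum)

lemma RR_single: "RR i k {{i}} = 0"
  unfolding RR_def by (simp add: qq_def)

lemma clade_main: "goodP i P \<Longrightarrow> card P \<le> Suc f \<Longrightarrow> clade_prob f i P k = RR i k P"
proof (induction f arbitrary: P)
  case 0
  then have fP: "finite P" and iP: "{i} \<in> P" unfolding goodP_def by auto
  then have "P = {{i}}" using 0 card_le_Suc0_iff_eq[OF fP] by auto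
  then show ?case by (simp add: RR_single)
next
  case (Suc f)
  have g: "goodP i P" by fact
  then have fP: "finite P" and iP: "{i} \<in> P" unfolding goodP_def by auto
  define Q where "Q = P - {{i}}"
  define N where "N = card Q"
  have fQ: "finite Q" unfolding Q_def using fP by simp
  have "card P > 0" using fP iP card_gt_0_iff by blast
  then have cP: "card P = N + 1" unfolding N_def Q_def using fP iP by (simp add: card_Diff_singleton)
  show ?case
  proof (cases "N = 0")
    case True
    then have "P = {{i}}" using cP fP iP card_le_Suc0_iff_eq[OF fP] by auto
    moreover have "mergers {{i}} = {}" unfolding mergers_eq subset_singleton_iff by auto
    ultimately show ?thesis by (simp add: RR_single)
  next
    case False
    have tr: "total_rate P = real N" using False cP fP by (subst total_rate_eq) auto
    define c where "c S = bs_rate (N + 1) (card S) / real N" for S :: "nat set set"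
    have "clade_prob (Suc f) i P k = (\<Sum>S\<in>mergers P. c S *
        (if {i} \<in> S then (if card (\<Union>S) = k then 1 else 0) else clade_prob f i ((P - S) \<union> {\<Union>S}) k))"
      unfolding clade_prob.simps tr c_def cP by simp
    also have "\<dots> = (\<Sum>S\<in>mergers P \<inter> {S. {i} \<in> S}. c S * (if card (\<Union>S) = k then 1 else 0))
        + (\<Sum>S\<in>mergers P \<inter> - {S. {i} \<in> S}. c S * clade_prob f i ((P - S) \<union> {\<Union>S}) k)"
    proof -
      have fM: "finite (mergers P)" unfolding mergers_eq by (rule finite_subset[of _ "Pow P"]) (auto simp: fP)
      show ?thesis
        unfolding sum.If_cases[OF fM, symmetric] by (intro sum.cong refl) simp
    qed
    finally have split: "clade_prob (Suc f) i P k = (\<Sum>S\<in>mergers P \<inter> {S. {i} \<in> S}. c S * (if card (\<Union>S) = k then 1 else 0))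
        + (\<Sum>S\<in>mergers P \<inter> - {S. {i} \<in> S}. c S * clade_prob f i ((P - S) \<union> {\<Union>S}) k)" .
    have iQ: "{i} \<notin> Q" unfolding Q_def by simp
    have m1: "mergers P \<inter> {S. {i} \<in> S} = insert {i} ` {L \<in> Pow Q. L \<noteq> {}}"
    proof (intro equalityI subsetI)
      fix S assume S: "S \<in> mergers P \<inter> {S. {i} \<in> S}"
      then have S1: "S \<subseteq> P" "2 \<le> card S" "{i} \<in> S" unfolding mergers_eq by auto
      have "S - {{i}} \<noteq> {}"
      proof
        assume "S - {{i}} = {}"
        then have "S = {{i}}" using S1 by auto
        then show False using S1 by simp
      qed
      moreover have "S = insert {i} (S - {{i}})" using S1 by auto
      ultimately show "S \<in> insert {i} ` {L \<in> Pow Q. L \<noteq> {}}" using S1 unfolding Q_def by blast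
    next
      fix S assume "S \<in> insert {i} ` {L \<in> Pow Q. L \<noteq> {}}"
      then obtain L where L: "L \<subseteq> Q" "L \<noteq> {}" "S = insert {i} L" by auto
      have fL: "finite L" using L fQ finite_subset by auto
      have "{i} \<notin> L" using L iQ by auto
      then have "card S = card L + 1" using L fL by simp
      moreover have "card L \<ge> 1" using L fL by (simp add: Suc_leI card_gt_0_iff)
      ultimately show "S \<in> mergers P \<inter> {S. {i} \<in> S}" unfolding mergers_eq using L iP unfolding Q_def by auto
    qed
    have inj1: "inj_on (insert {i}) {L \<in> Pow Q. L \<noteq> {}}"
      unfolding inj_on_def using iQ by (metis (no_types, lifting) Diff_insert_absorb PowD mem_Collect_eq subsetD)
    have part1: "(\<Sum>S\<in>mergers P \<inter> {S. {i} \<in> S}. c S * (if card (\<Union>S) = k then 1 else 0))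
        = (\<Sum>L\<in>Pow Q. (if L \<noteq> {} then bs_rate (N + 1) (card L + 1) else 0) / real N * hh i k L)"
    proof -
      have "(\<Sum>S\<in>mergers P \<inter> {S. {i} \<in> S}. c S * (if card (\<Union>S) = k then 1 else 0))
          = (\<Sum>L\<in>{L \<in> Pow Q. L \<noteq> {}}. c (insert {i} L) * (if card (\<Union>(insert {i} L)) = k then 1 else 0))"
        unfolding m1 using inj1 by (simp add: sum.reindex)
      also have "\<dots> = (\<Sum>L\<in>{L \<in> Pow Q. L \<noteq> {}}. bs_rate (N + 1) (card L + 1) / real N * hh i k L)"
      proof (rule sum.cong[OF refl])
        fix L assume L: "L \<in> {L \<in> Pow Q. L \<noteq> {}}"
        have fL: "finite L" using L fQ finite_subset by auto
        have "{i} \<notin> L" using L iQ by auto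
        then have "card (insert {i} L) = card L + 1" using fL by simp
        then show "c (insert {i} L) * (if card (\<Union>(insert {i} L)) = k then 1 else 0) = bs_rate (N + 1) (card L + 1) / real N * hh i k L"
          unfolding c_def hh_def by simp
      qed
      also have "\<dots> = (\<Sum>L\<in>Pow Q. (if L \<noteq> {} then bs_rate (N + 1) (card L + 1) else 0) / real N * hh i k L)"
        using fQ by (simp add: sum.inter_filter[symmetric] if_distrib if_distribR cong: if_cong)
      finally show ?thesis .
    qed
    define M2 where "M2 = {S. S \<subseteq> Q \<and> 2 \<le> card S}"
    have m2: "mergers P \<inter> - {S. {i} \<in> S} = M2" unfolding mergers_eq Q_def M2_def by auto
    define G2 where "G2 S = (\<Sum>L0\<in>Pow (Q - S). qq (N + 2 - card S) (card L0) * hh i k L0)" for S :: "nat set set"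
    define G1 where "G1 S = (\<Sum>L0\<in>Pow (Q - S). qq (N + 2 - card S) (card L0 + 1) * hh i k (S \<union> L0))" for S :: "nat set set"
    have part2: "(\<Sum>S\<in>mergers P \<inter> - {S. {i} \<in> S}. c S * clade_prob f i ((P - S) \<union> {\<Union>S}) k)
        = (\<Sum>S\<in>M2. c S * (G2 S + G1 S))"
      unfolding m2
    proof (rule sum.cong[OF refl])
      fix S assume S: "S \<in> M2"
      have SQ: "S \<subseteq> P - {{i}}" "2 \<le> card S" using S unfolding M2_def Q_def by auto
      note mp = merge_props[OF g SQ]
      have cle: "card ((P - S) \<union> {\<Union>S}) \<le> Suc f" using mp(5) SQ(2) Suc.prems(2) by simp
      have cPS: "card ((P - S) \<union> {\<Union>S}) = N + 2 - card S" using mp(5) cP by simp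
      have IH: "clade_prob f i ((P - S) \<union> {\<Union>S}) k = RR i k ((P - S) \<union> {\<Union>S})"
        by (rule Suc.IH[OF mp(1) cle])
      have BnQ: "\<Union>S \<notin> Q - S" using mp(2) unfolding Q_def by auto
      have "RR i k ((P - S) \<union> {\<Union>S}) = (\<Sum>L\<in>Pow (insert (\<Union>S) (Q - S)). qq (N + 2 - card S) (card L) * hh i k L)"
        unfolding RR_def cPS mp(4) Q_def by simp
      also have "\<dots> = G2 S + (\<Sum>L0\<in>Pow (Q - S). qq (N + 2 - card S) (card (insert (\<Union>S) L0)) * hh i k (insert (\<Union>S) L0))"
        unfolding G2_def using fQ BnQ by (intro sum_Pow_insert) auto
      also have "(\<Sum>L0\<in>Pow (Q - S). qq (N + 2 - card S) (card (insert (\<Union>S) L0)) * hh i k (insert (\<Union>S) L0)) = G1 S"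
        unfolding G1_def
      proof (rule sum.cong[OF refl])
        fix L0 assume L0: "L0 \<in> Pow (Q - S)"
        have fL0: "finite L0" using L0 fQ finite_subset by auto
        have "\<Union>S \<notin> L0" using L0 BnQ by auto
        then have c1: "card (insert (\<Union>S) L0) = card L0 + 1" using fL0 by simp
        have "\<Union>(insert {i} (insert (\<Union>S) L0)) = \<Union>(insert {i} (S \<union> L0))" by auto
        then have "hh i k (insert (\<Union>S) L0) = hh i k (S \<union> L0)" unfolding hh_def by simp
        then show "qq (N + 2 - card S) (card (insert (\<Union>S) L0)) * hh i k (insert (\<Union>S) L0)
            = qq (N + 2 - card S) (card L0 + 1) * hh i k (S \<union> L0)" using c1 by simp
      qed
      finally show "c S * clade_prob f i ((P - S) \<union> {\<Union>S}) k = c S * (G2 S + G1 S)" using IH by simp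
    qed
    define F1 where "F1 L = (if L \<noteq> {} then bs_rate (N + 1) (card L + 1) else 0)" for L :: "nat set set"
    define F2 where "F2 L = (\<Sum>S\<in>{S. S \<subseteq> L \<and> 2 \<le> card S}. bs_rate (N + 1) (card S) * qq (N + 2 - card S) (card L + 1 - card S))" for L :: "nat set set"
    define F3 where "F3 L = (\<Sum>S\<in>{S. S \<subseteq> Q - L \<and> 2 \<le> card S}. bs_rate (N + 1) (card S) * qq (N + 2 - card S) (card L))" for L :: "nat set set"
    have "RR i k P = (\<Sum>L\<in>Pow Q. qq (N + 1) (card L) * hh i k L)"
      unfolding RR_def cP Q_def ..
    also have "\<dots> = (\<Sum>L\<in>Pow Q. F1 L / real N * hh i k L) + (\<Sum>L\<in>Pow Q. F2 L / real N * hh i k L)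
        + (\<Sum>L\<in>Pow Q. F3 L / real N * hh i k L)"
    proof -
      have "\<And>L. L \<in> Pow Q \<Longrightarrow> qq (N + 1) (card L) = (F1 L + F2 L + F3 L) / real N"
      proof -
        fix L assume "L \<in> Pow Q"
        then have "real N * qq (N + 1) (card L) = F1 L + F2 L + F3 L"
          using QI_sub[OF fQ, of L] unfolding N_def F1_def F2_def F3_def by simp
        then show "qq (N + 1) (card L) = (F1 L + F2 L + F3 L) / real N" using False
          by (simp add: field_simps)
      qed
      then have "(\<Sum>L\<in>Pow Q. qq (N + 1) (card L) * hh i k L) = (\<Sum>L\<in>Pow Q. (F1 L + F2 L + F3 L) / real N * hh i k L)"
        by (intro sum.cong refl) simp
      then show ?thesis by (simp add: sum.distrib[symmetric] add_divide_distrib distrib_right)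
    qed
    also have "(\<Sum>L\<in>Pow Q. F2 L / real N * hh i k L) = (\<Sum>S\<in>M2. c S * G1 S)"
    proof -
      have "(\<Sum>L\<in>Pow Q. F2 L / real N * hh i k L)
          = (\<Sum>L\<in>Pow Q. \<Sum>S\<in>{S. S \<subseteq> L \<and> 2 \<le> card S}. c S * (qq (N + 2 - card S) (card L + 1 - card S) * hh i k L))"
        unfolding F2_def c_def by (simp add: sum_divide_distrib sum_distrib_right mult.assoc)
      also have "\<dots> = (\<Sum>S\<in>M2. \<Sum>L0\<in>Pow (Q - S). c S * (qq (N + 2 - card S) (card (S \<union> L0) + 1 - card S) * hh i k (S \<union> L0)))"
        unfolding M2_def by (rule SW1[OF fQ])
      also have "\<dots> = (\<Sum>S\<in>M2. c S * G1 S)"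
      proof (rule sum.cong[OF refl])
        fix S assume S: "S \<in> M2"
        have fS: "finite S" using S fQ finite_subset unfolding M2_def by auto
        have "\<And>L0. L0 \<in> Pow (Q - S) \<Longrightarrow> card (S \<union> L0) + 1 - card S = card L0 + 1"
        proof -
          fix L0 assume L0: "L0 \<in> Pow (Q - S)"
          have fL0: "finite L0" using L0 fQ finite_subset by auto
          have "S \<inter> L0 = {}" using L0 by auto
          then show "card (S \<union> L0) + 1 - card S = card L0 + 1" using fS fL0 by (simp add: card_Un_disjoint)
        qed
        then show "(\<Sum>L0\<in>Pow (Q - S). c S * (qq (N + 2 - card S) (card (S \<union> L0) + 1 - card S) * hh i k (S \<union> L0))) = c S * G1 S"
          unfolding G1_def sum_distrib_left by (intro sum.cong refl) simp
      qed
      finally show ?thesis .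
    qed
    also have "(\<Sum>L\<in>Pow Q. F3 L / real N * hh i k L) = (\<Sum>S\<in>M2. c S * G2 S)"
    proof -
      have "(\<Sum>L\<in>Pow Q. F3 L / real N * hh i k L)
          = (\<Sum>L\<in>Pow Q. \<Sum>S\<in>{S. S \<subseteq> Q - L \<and> 2 \<le> card S}. c S * (qq (N + 2 - card S) (card L) * hh i k L))"
        unfolding F3_def c_def by (simp add: sum_divide_distrib sum_distrib_right mult.assoc)
      also have "\<dots> = (\<Sum>S\<in>M2. \<Sum>L\<in>Pow (Q - S). c S * (qq (N + 2 - card S) (card L) * hh i k L))"
        unfolding M2_def by (rule SW2[OF fQ])
      also have "\<dots> = (\<Sum>S\<in>M2. c S * G2 S)"
        unfolding G2_def sum_distrib_left ..
      finally show ?thesis .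
    qed
    finally have "RR i k P = (\<Sum>L\<in>Pow Q. F1 L / real N * hh i k L) + (\<Sum>S\<in>M2. c S * (G2 S + G1 S))"
      by (simp add: sum.distrib distrib_left)
    then show ?thesis using split part1 part2 unfolding F1_def by simp
  qed
qed


lemma card_union_singletons:
  assumes L: "L \<subseteq> (\<lambda>x. {x}) ` {1..(n::nat)} - {{i}}"
  shows "card (\<Union>(insert {i} L)) = card L + 1"
proof -
  have fL: "finite L" using L by (rule finite_subset) simp
  have sing: "\<forall>B\<in>L. \<exists>x. B = {x}" using L by auto
  have "card (\<Union>L) = sum card L"
    using fL sing by (intro card_Union_disjoint) (auto simp: pairwise_def disjnt_def)
  also have "\<dots> = (\<Sum>B\<in>L. 1)" using sing by (intro sum.cong refl) auto
  also have "\<dots> = card L" by simp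
  finally have c: "card (\<Union>L) = card L" .
  have "i \<notin> \<Union>L" using L by auto
  moreover have "finite (\<Union>L)" using fL sing by auto
  ultimately show ?thesis using c by simp
qed

lemma clade_initial:
  assumes n: "n \<ge> 2" and i: "i \<in> {1..n}" and j: "1 \<le> j" "j \<le> n - 1"
  shows "clade_prob n i ((\<lambda>x. {x}) ` {1..n}) (j + 1) = ff (n - 1 - j) / real j"
proof -
  define P0 where "P0 = (\<lambda>x. {x}) ` {1..n}"
  define Q0 where "Q0 = P0 - {{i}}"
  have g: "goodP i P0" unfolding goodP_def P0_def using i by auto
  have cP0: "card P0 = n" unfolding P0_def by (subst card_image) (auto simp: inj_on_def)
  have fQ0: "finite Q0" unfolding Q0_def P0_def by simp
  have cQ0: "card Q0 = n - 1" unfolding Q0_def using cP0 i by (simp add: P0_def card_Diff_singleton)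
  have "clade_prob n i P0 (j + 1) = RR i (j + 1) P0"
    using clade_main[OF g] cP0 by simp
  also have "\<dots> = (\<Sum>L\<in>Pow Q0. if card L = j then qq n j else 0)"
    unfolding RR_def cP0 Q0_def
  proof (rule sum.cong[OF refl])
    fix L assume "L \<in> Pow (P0 - {{i}})"
    then have "card (\<Union>(insert {i} L)) = card L + 1" unfolding P0_def by (intro card_union_singletons) auto
    then show "qq n (card L) * hh i (j + 1) L = (if card L = j then qq n j else 0)" unfolding hh_def by simp
  qed
  also have "\<dots> = real (card {L. L \<subseteq> Q0 \<and> card L = j}) * qq n j"
    using fQ0 by (simp add: sum.If_cases Int_def)
  also have "\<dots> = real ((n - 1) choose j) * qq n j" using n_subsets[OF fQ0] cQ0 by simp
  also have "\<dots> = ff (n - 1 - j) / real j"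
  proof -
    have a: "(fact j :: real) * fact (n - 1 - j) * real ((n - 1) choose j) = fact (n - 1)"
      using binomial_fact_lemma[OF j(2)] by (metis of_nat_fact of_nat_mult)
    have fj: "(fact j :: real) = real j * fact (j - 1)" using j by (simp add: fact_reduce)
    have jn: "j \<noteq> 0" using j by simp
    show ?thesis unfolding qq_def using jn a fj
      by (simp add: field_simps)
  qed
  finally show ?thesis unfolding P0_def .
qed

lemma minclade_formula:
  assumes n: "n \<ge> 2" and j: "1 \<le> j" "j \<le> n - 1"
  shows "minclade_prob n (j + 1) = ff (n - 1 - j) / real j"
  unfolding minclade_prob_def using clade_initial[OF n _ j] n by simp


lemma EB:
  fixes h :: "'b \<Rightarrow> real"
  assumes "finite (set_pmf p)" "\<And>x. x \<in> set_pmf p \<Longrightarrow> finite (set_pmf (f x))"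
  shows "measure_pmf.expectation (p \<bind> f) h = measure_pmf.expectation p (\<lambda>x. measure_pmf.expectation (f x) h)"
  using assms by (subst pmf_expectation_bind[of "set_pmf p"]) (auto simp: integral_measure_pmf[of "set_pmf p"] mult.commute)

lemma E_cong:
  fixes f g :: "'a \<Rightarrow> real"
  assumes "\<And>x. x \<in> set_pmf p \<Longrightarrow> f x = g x"
  shows "measure_pmf.expectation p f = measure_pmf.expectation p g"
  using assms by (intro integral_cong_AE) (auto simp: AE_measure_pmf_iff)

lemma uu_step_sum: "(\<Sum>k=0..Suc m. uu (Suc m) k * g k) = (\<Sum>k=0..m. uu m k * ((g (Suc k) + real m * g k) / real (Suc m)))"
proof -
  have "(\<Sum>k=0..Suc m. uu (Suc m) k * g k) = (\<Sum>k=0..Suc m. (real m * uu m k * g k + up m k * g k) / real (Suc m))"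
    by (intro sum.cong refl) (simp add: up_def field_simps)
  also have "\<dots> = ((\<Sum>k=0..Suc m. real m * uu m k * g k) + (\<Sum>k=0..Suc m. up m k * g k)) / real (Suc m)"
    by (simp only: add_divide_distrib sum.distrib sum_divide_distrib)
  also have "(\<Sum>k=0..Suc m. real m * uu m k * g k) = (\<Sum>k=0..m. real m * uu m k * g k)"
    by (simp add: uu_zero)
  also have "(\<Sum>k=0..Suc m. up m k * g k) = (\<Sum>k=0..m. uu m k * g (Suc k))"
    by (subst sum.atLeast0_atMost_Suc_shift) (simp add: up_def)
  finally show ?thesis
    by (simp add: sum_divide_distrib[symmetric] sum.distrib[symmetric] field_simps)
qed

lemma bern_finite: "finite (set_pmf (bern_seq m))"
  unfolding bern_seq_def
  by (rule finite_subset[OF set_Pi_pmf_subset']) (auto intro!: finite_PiE_dflt)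

lemma bern_law:
  fixes g :: "real \<Rightarrow> real"
  shows "measure_pmf.expectation (bern_seq m) (\<lambda>b. g (\<Sum>i=1..m. if b i then 1 else 0))
       = (\<Sum>k=0..m. uu m k * g (real k))"
proof (induction m arbitrary: g)
  case 0
  show ?case by (simp add: bern_seq_def)
next
  case (Suc m)
  let ?p = "\<lambda>i. bernoulli_pmf (1 / real i)"
  have "bern_seq (Suc m) = bernoulli_pmf (1 / real (Suc m)) \<bind> (\<lambda>y. bern_seq m \<bind> (\<lambda>f. return_pmf (f(Suc m := y))))"
  proof -
    have e: "{1..Suc m} = insert (Suc m) {1..m}" by auto
    show ?thesis unfolding bern_seq_def e by (subst Pi_pmf_insert') auto
  qed
  then have "measure_pmf.expectation (bern_seq (Suc m)) (\<lambda>b. g (\<Sum>i=1..Suc m. if b i then 1 else 0))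
     = measure_pmf.expectation (bernoulli_pmf (1 / real (Suc m)))
         (\<lambda>y. measure_pmf.expectation (bern_seq m) (\<lambda>f. g (\<Sum>i=1..Suc m. if (f(Suc m := y)) i then 1 else 0)))"
    using bern_finite by (simp add: EB)
  also have "\<dots> = measure_pmf.expectation (bernoulli_pmf (1 / real (Suc m)))
         (\<lambda>y. measure_pmf.expectation (bern_seq m) (\<lambda>f. g ((\<Sum>i=1..m. if f i then 1 else 0) + (if y then 1 else 0))))"
    by (simp add: sum.cl_ivl_Suc)
  also have "\<dots> = (\<Sum>k=0..m. uu m k * g (real k + 1)) * (1 / real (Suc m)) + (\<Sum>k=0..m. uu m k * g (real k)) * (1 - 1 / real (Suc m))"
    using Suc.IH[of "\<lambda>x. g (x + 1)"] Suc.IH[of g] by simp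
  also have "\<dots> = (\<Sum>k=0..m. uu m k * ((g (real (Suc k)) + real m * g (real k)) / real (Suc m)))"
  proof -
    have "(\<Sum>k=0..m. uu m k * ((g (real (Suc k)) + real m * g (real k)) / real (Suc m)))
        = (\<Sum>k=0..m. uu m k * g (real k + 1) * (1 / real (Suc m)) + uu m k * g (real k) * (real m / real (Suc m)))"
      by (intro sum.cong refl) (simp add: add_divide_distrib algebra_simps)
    moreover have "1 - 1 / real (Suc m) = real m / real (Suc m)" by (simp add: field_simps)
    ultimately show ?thesis by (simp add: sum.distrib sum_distrib_right sum_divide_distrib)
  qed
  also have "\<dots> = (\<Sum>k=0..Suc m. uu (Suc m) k * g (real k))"
    by (rule uu_step_sum[symmetric])
  finally show ?case .
qed


lemma uu_0: "uu m 0 = (if m = 0 then 1 else 0)"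
  by (induction m) auto

lemma finite_Delta: "finite (Delta_set m k)"
  unfolding Delta_set_def by (rule finite_subset[of _ "{1..k} \<rightarrow>\<^sub>E {1..m}"]) (auto intro: finite_PiE)

lemma Delta_0: "Delta_set m 0 = (if m = 0 then {\<lambda>_. undefined} else {})"
  unfolding Delta_set_def by auto

lemma Delta_uu: "(\<Sum>v\<in>Delta_set m k. 1 / (\<Prod>i=1..k. real (v i))) = fact k * uu m k"
proof (induction k arbitrary: m)
  case 0
  show ?case by (simp add: Delta_0 uu_0)
next
  case (Suc k)
  let ?S = "Sigma {1..m} (\<lambda>r. Delta_set (m - r) k)"
  have bij: "(\<Sum>v\<in>Delta_set m (Suc k). 1 / (\<Prod>i=1..Suc k. real (v i)))
      = (\<Sum>p\<in>?S. 1 / ((\<Prod>i=1..k. real (snd p i)) * real (fst p)))"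
  proof (rule sum.reindex_bij_witness[where j = "\<lambda>v. (v (Suc k), restrict v {1..k})" and i = "\<lambda>p. (snd p)(Suc k := fst p)"])
    fix v assume v: "v \<in> Delta_set m (Suc k)"
    then have vP: "v \<in> {1..Suc k} \<rightarrow>\<^sub>E {1..m}" and vs: "(\<Sum>i=1..Suc k. v i) = m" unfolding Delta_set_def by auto
    show "(snd (v (Suc k), restrict v {1..k}))(Suc k := fst (v (Suc k), restrict v {1..k})) = v"
      using vP by (auto simp: restrict_def PiE_def extensional_def fun_eq_iff)
    have s2: "(\<Sum>i=1..k. v i) = m - v (Suc k)" using vs by (simp add: sum.cl_ivl_Suc)
    have le: "\<And>i. i \<in> {1..k} \<Longrightarrow> v i \<le> m - v (Suc k)"
      unfolding s2[symmetric] by (rule member_le_sum) auto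
    have r: "v (Suc k) \<in> {1..m}" using vP by auto
    show "(v (Suc k), restrict v {1..k}) \<in> ?S"
      using r vP le s2 unfolding Delta_set_def by (auto simp: PiE_def Pi_def)
    have "(\<Prod>i=1..Suc k. real (v i)) = (\<Prod>i=1..k. real (v i)) * real (v (Suc k))"
      by (simp add: prod.cl_ivl_Suc)
    then show "1 / ((\<Prod>i=1..k. real (snd (v (Suc k), restrict v {1..k}) i)) * real (fst (v (Suc k), restrict v {1..k})))
        = 1 / (\<Prod>i=1..Suc k. real (v i))"
      by simp
  next
    fix p assume p: "p \<in> ?S"
    obtain r w where pw: "p = (r, w)" by (cases p)
    have r: "r \<in> {1..m}" and w: "w \<in> {1..k} \<rightarrow>\<^sub>E {1..m - r}" and ws: "(\<Sum>i=1..k. w i) = m - r"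
      using p unfolding pw Delta_set_def by auto
    have ext: "restrict w {1..k} = w" using w by (simp add: PiE_def extensional_restrict)
    have "restrict (w(Suc k := r)) {1..k} = restrict w {1..k}" by (auto simp: restrict_def fun_eq_iff)
    then show "(((snd p)(Suc k := fst p)) (Suc k), restrict ((snd p)(Suc k := fst p)) {1..k}) = p"
      unfolding pw using ext by simp
    have "(\<Sum>i=1..Suc k. (w(Suc k := r)) i) = (\<Sum>i=1..k. w i) + r"
      by (simp add: sum.cl_ivl_Suc)
    then have "(\<Sum>i=1..Suc k. (w(Suc k := r)) i) = m" using ws r by simp
    moreover have "w(Suc k := r) \<in> {1..Suc k} \<rightarrow>\<^sub>E {1..m}"
      using w r by (auto simp: PiE_def Pi_def extensional_def)
    ultimately show "(snd p)(Suc k := fst p) \<in> Delta_set m (Suc k)" unfolding pw Delta_set_def by simp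
  qed
  also have "\<dots> = (\<Sum>r=1..m. \<Sum>w\<in>Delta_set (m - r) k. 1 / ((\<Prod>i=1..k. real (w i)) * real r))"
    by (subst sum.Sigma) (auto simp: finite_Delta split_def)
  also have "\<dots> = (\<Sum>r=1..m. fact k * uu (m - r) k / real r)"
  proof (rule sum.cong[OF refl])
    fix r assume "r \<in> {1..m}"
    have "(\<Sum>w\<in>Delta_set (m - r) k. 1 / ((\<Prod>i=1..k. real (w i)) * real r))
        = (\<Sum>w\<in>Delta_set (m - r) k. 1 / (\<Prod>i=1..k. real (w i))) / real r"
      by (simp add: sum_divide_distrib)
    then show "(\<Sum>w\<in>Delta_set (m - r) k. 1 / ((\<Prod>i=1..k. real (w i)) * real r)) = fact k * uu (m - r) k / real r"
      using Suc.IH[of "m - r"] by simp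
  qed
  also have "\<dots> = fact k * (\<Sum>r=1..m. up (m - r) (Suc k) / real r)"
    by (simp add: sum_distrib_left up_def)
  also have "\<dots> = fact k * (real (Suc k) * uu m (Suc k))"
    using uu_deriv[of "Suc k" m] by simp
  also have "\<dots> = fact (Suc k) * uu m (Suc k)" by simp
  finally show ?case .
qed

lemma delta_formula:
  assumes m: "m \<ge> 1"
  shows "ff m = (\<Sum>k=1..m. 1 / fact (k + 1) * (\<Sum>v\<in>Delta_set m k. 1 / (\<Prod>i=1..k. real (v i))))"
proof -
  have "ff m = (\<Sum>k=1..m. uu m k / real (Suc k))"
    unfolding ff_def using m by (simp add: sum.atLeast_Suc_atMost uu_0)
  also have "\<dots> = (\<Sum>k=1..m. 1 / fact (k + 1) * (\<Sum>v\<in>Delta_set m k. 1 / (\<Prod>i=1..k. real (v i))))"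
  proof (rule sum.cong[OF refl])
    fix k
    show "uu m k / real (Suc k) = 1 / fact (k + 1) * (\<Sum>v\<in>Delta_set m k. 1 / (\<Prod>i=1..k. real (v i)))"
    proof -
      have f: "(fact (k + 1) :: real) = real (Suc k) * fact k" by simp
      show ?thesis unfolding Delta_uu f by simp
    qed
  qed
  finally show ?thesis .
qed


lemma sit_left_eq:
  assumes p: "\<sigma> permutes {1..m}" and c: "c \<in> {1..m}"
  shows "sit_left \<sigma> (Suc m) c = \<sigma> \<circ> Transposition.transpose (Suc m) (inv \<sigma> c)"
proof (rule ext)
  fix y
  let ?d = "inv \<sigma> c"
  have sd: "\<sigma> ?d = c" using permutes_inverses(1)[OF p] .
  have dm: "?d \<in> {1..m}" using c p by (metis permutes_in_image sd)
  have sx: "\<sigma> (Suc m) = Suc m" using p by (intro permutes_not_in) auto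
  have inj: "\<And>z. \<sigma> z = c \<Longrightarrow> z = ?d" using p by (metis permutes_inverses(2))
  show "sit_left \<sigma> (Suc m) c y = (\<sigma> \<circ> Transposition.transpose (Suc m) ?d) y"
  proof (cases "y = Suc m")
    case True then show ?thesis using sd dm by (simp add: sit_left_def)
  next
    case False
    note F = False
    show ?thesis
    proof (cases "y = ?d")
      case True then show ?thesis using F sd sx dm by (simp add: sit_left_def)
    next
      case False
      then have "\<sigma> y \<noteq> c" using inj by blast
      then show ?thesis using F False by (simp add: sit_left_def)
    qed
  qed
qed

lemma sit_left_permutes:
  assumes p: "\<sigma> permutes {1..m}" and c: "c \<in> {1..m}"
  shows "sit_left \<sigma> (Suc m) c permutes {1..Suc m}"
proof -
  have p': "\<sigma> permutes {1..Suc m}" using p by (rule permutes_subset) auto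
  have dm: "inv \<sigma> c \<in> {1..m}" using permutes_in_image[OF permutes_inv[OF p]] c by blast
  have a1: "Suc m \<in> {1..Suc m}" "inv \<sigma> c \<in> {1..Suc m}" using dm by auto
  have "Transposition.transpose (Suc m) (inv \<sigma> c) permutes {1..Suc m}"
    by (rule permutes_swap_id[OF a1])
  then have "\<sigma> \<circ> Transposition.transpose (Suc m) (inv \<sigma> c) permutes {1..Suc m}"
    by (rule permutes_compose[OF _ p'])
  then show ?thesis by (simp only: sit_left_eq[OF p c])
qed

lemma set_crp_Suc: "set_pmf (crp (Suc m)) = (\<Union>\<sigma>\<in>set_pmf (crp m). \<Union>c\<in>{1..Suc m}. {if c = Suc m then \<sigma> else sit_left \<sigma> (Suc m) c})"
  by (simp add: set_bind_pmf)

lemma crp_perm: "\<sigma> \<in> set_pmf (crp m) \<Longrightarrow> \<sigma> permutes {1..m}"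
proof (induction m arbitrary: \<sigma>)
  case 0 then have "\<sigma> = id" by (simp add: id_def)
  then show ?case by (simp only: permutes_id)
next
  case (Suc m)
  then obtain \<tau> c where t: "\<tau> \<in> set_pmf (crp m)" "c \<in> {1..Suc m}"
    and s: "\<sigma> = (if c = Suc m then \<tau> else sit_left \<tau> (Suc m) c)" unfolding set_crp_Suc by blast
  have pt: "\<tau> permutes {1..m}" using Suc.IH t by simp
  show ?case
  proof (cases "c = Suc m")
    case True then show ?thesis using s pt by (simp add: permutes_subset)
  next
    case False then show ?thesis using s pt t sit_left_permutes by auto
  qed
qed

lemma crp_finite: "finite (set_pmf (crp m))"
proof (induction m)
  case 0 then show ?case by simp
next
  case (Suc m) then show ?case unfolding set_crp_Suc by (intro finite_UN_I) auto
qed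

context
  fixes \<sigma> :: "nat \<Rightarrow> nat" and m :: nat
  assumes p: "\<sigma> permutes {1..m}"
begin

lemma perm: "permutation \<sigma>"
  using p by (rule permutes_imp_permutation[rotated]) simp

lemma T_orbit: "crp_table \<sigma> c = orbit \<sigma> c"
  unfolding crp_table_def orbit_altdef_permutation[OF perm] ..

lemma T_self: "c \<in> crp_table \<sigma> c"
  unfolding crp_table_def by (auto intro: exI[of _ 0])

lemma T_closed: "z \<in> crp_table \<sigma> c \<Longrightarrow> \<sigma> z \<in> crp_table \<sigma> c"
  unfolding crp_table_def
proof -
  assume "z \<in> {(\<sigma> ^^ k) c |k. True}"
  then obtain k where "z = (\<sigma> ^^ k) c" by auto
  then have "\<sigma> z = (\<sigma> ^^ Suc k) c" by simp
  then show "\<sigma> z \<in> {(\<sigma> ^^ k) c |k. True}" by blast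
qed

lemma funpow_in: "c \<in> {1..m} \<Longrightarrow> (\<sigma> ^^ k) c \<in> {1..m}"
proof (induction k)
  case 0 then show ?case by simp
next
  case (Suc k)
  have "(\<sigma> ^^ Suc k) c = \<sigma> ((\<sigma> ^^ k) c)" by simp
  then show ?case using permutes_in_image[OF p, of "(\<sigma> ^^ k) c"] Suc by simp
qed

lemma T_sub: "c \<in> {1..m} \<Longrightarrow> crp_table \<sigma> c \<subseteq> {1..m}"
  unfolding crp_table_def using funpow_in by auto

lemma funpow_out: "c \<notin> {1..m} \<Longrightarrow> (\<sigma> ^^ k) c = c"
  by (induction k) (auto simp: permutes_not_in[OF p])

lemma T_out: "c \<notin> {1..m} \<Longrightarrow> crp_table \<sigma> c = {c}"
  unfolding crp_table_def using funpow_out by auto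

lemma T_eq: "y \<in> crp_table \<sigma> c \<Longrightarrow> crp_table \<sigma> y = crp_table \<sigma> c"
  unfolding T_orbit
proof -
  assume y: "y \<in> orbit \<sigma> c"
  have cc: "c \<in> orbit \<sigma> c" by (rule permutation_self_in_orbit[OF perm])
  have cy: "c \<in> orbit \<sigma> y" by (rule orbit_swap[OF cc y])
  show "orbit \<sigma> y = orbit \<sigma> c"
    using orbit_trans[OF _ y] orbit_trans[OF _ cy] by blast
qed

lemma T_finite: "finite (crp_table \<sigma> c)"
  by (cases "c \<in> {1..m}") (auto intro: finite_subset[OF T_sub] simp: T_out)

lemma tables_new: "crp_tables (Suc m) \<sigma> = insert {Suc m} (crp_tables m \<sigma>)"
proof -
  have "{1..Suc m} = insert (Suc m) {1..m}" by auto
  then show ?thesis unfolding crp_tables_def using T_out[of "Suc m"] by simp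
qed

lemma tables_sub: "T \<in> crp_tables m \<sigma> \<Longrightarrow> T \<subseteq> {1..m}"
  unfolding crp_tables_def using T_sub by blast

lemma tables_card: "T \<in> crp_tables m \<sigma> \<Longrightarrow> card T \<in> {1..m}"
proof -
  assume T: "T \<in> crp_tables m \<sigma>"
  then obtain c where c: "c \<in> {1..m}" "T = crp_table \<sigma> c" unfolding crp_tables_def by auto
  have "card T \<le> m" using tables_sub[OF T] card_mono[of "{1..m}" T] by simp
  moreover have "card T \<ge> 1" using c T_self[of c] T_finite[of c] by (metis One_nat_def Suc_leI card_gt_0_iff empty_iff)
  ultimately show ?thesis by simp
qed

end


context
  fixes \<sigma> :: "nat \<Rightarrow> nat" and m c :: nat
  assumes p: "\<sigma> permutes {1..m}" and c: "c \<in> {1..m}"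
begin

definition "\<sigma>' = sit_left \<sigma> (Suc m) c"

lemma p': "\<sigma>' permutes {1..Suc m}"
  unfolding \<sigma>'_def by (rule sit_left_permutes[OF p c])

lemma s'_x: "\<sigma>' (Suc m) = c" unfolding \<sigma>'_def sit_left_def by simp

lemma s'_in: "z \<in> {1..m} \<Longrightarrow> \<sigma>' z = (if \<sigma> z = c then Suc m else \<sigma> z)"
  unfolding \<sigma>'_def sit_left_def by auto

lemma join_other:
  assumes y: "y \<in> {1..m}" "y \<notin> crp_table \<sigma> c"
  shows "crp_table \<sigma>' y = crp_table \<sigma> y"
proof -
  let ?O = "crp_table \<sigma> y"
  have eq: "\<And>z. z \<in> ?O \<Longrightarrow> \<sigma>' z = \<sigma> z"
  proof -
    fix z assume z: "z \<in> ?O"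
    have zm: "z \<in> {1..m}" using T_sub[OF p y(1)] z by auto
    have "\<sigma> z \<noteq> c"
    proof
      assume "\<sigma> z = c"
      then have "c \<in> ?O" using T_closed[OF p z] by simp
      then have "crp_table \<sigma> c = ?O" by (rule T_eq[OF p])
      then show False using y T_self[OF p, of y] by simp
    qed
    then show "\<sigma>' z = \<sigma> z" using s'_in[OF zm] by simp
  qed
  have "\<And>k. (\<sigma>' ^^ k) y = (\<sigma> ^^ k) y \<and> (\<sigma> ^^ k) y \<in> ?O"
  proof -
    fix k show "(\<sigma>' ^^ k) y = (\<sigma> ^^ k) y \<and> (\<sigma> ^^ k) y \<in> ?O"
    proof (induction k)
      case 0 then show ?case using T_self[OF p] by simp
    next
      case (Suc k)
      then show ?case using eq[of "(\<sigma> ^^ k) y"] T_closed[OF p, of "(\<sigma> ^^ k) y" y] by simp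
    qed
  qed
  then show ?thesis unfolding crp_table_def by auto
qed

lemma join_c: "crp_table \<sigma>' c = insert (Suc m) (crp_table \<sigma> c)"
proof -
  have perm': "permutation \<sigma>'" using p' by (rule permutes_imp_permutation[rotated]) simp
  let ?T = "crp_table \<sigma> c"
  have Tm: "?T \<subseteq> {1..m}" by (rule T_sub[OF p c])
  have "orbit \<sigma>' c \<subseteq> insert (Suc m) ?T"
  proof
    fix z assume "z \<in> orbit \<sigma>' c"
    then show "z \<in> insert (Suc m) ?T"
    proof induction
      case base
      show ?case using s'_in[OF c] T_closed[OF p T_self[OF p, of c]] by auto
    next
      case (step y)
      show ?case
      proof (cases "y = Suc m")
        case True then show ?thesis using s'_x T_self[OF p, of c] by simp
      next
        case False
        then have yT: "y \<in> ?T" using step by simp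
        then have ym: "y \<in> {1..m}" using Tm by auto
        show ?thesis using s'_in[OF ym] T_closed[OF p yT] by (cases "\<sigma> y = c") auto
      qed
    qed
  qed
  moreover have TO: "?T \<subseteq> orbit \<sigma>' c"
  proof
    fix z assume "z \<in> ?T"
    then have "z \<in> orbit \<sigma> c" unfolding T_orbit[OF p] .
    then show "z \<in> orbit \<sigma>' c"
    proof induction
      case base
      show ?case
      proof (cases "\<sigma> c = c")
        case True then show ?thesis using permutation_self_in_orbit[OF perm'] by simp
      next
        case False then show ?thesis using s'_in[OF c] orbit.base[of \<sigma>' c] by simp
      qed
    next
      case (step y)
      have "y \<in> ?T" using step(1) unfolding T_orbit[OF p] .
      then have ym: "y \<in> {1..m}" using Tm by auto
      show ?case
      proof (cases "\<sigma> y = c")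
        case True then show ?thesis using permutation_self_in_orbit[OF perm'] by simp
      next
        case False then show ?thesis using s'_in[OF ym] orbit.step[OF step(2)] by simp
      qed
    qed
  qed
  moreover have "Suc m \<in> orbit \<sigma>' c"
  proof -
    let ?d = "inv \<sigma> c"
    have sd: "\<sigma> ?d = c" using permutes_inverses(1)[OF p] .
    have dm: "?d \<in> {1..m}" using permutes_in_image[OF permutes_inv[OF p]] c by blast
    have "c \<in> crp_table \<sigma> ?d" using T_closed[OF p T_self[OF p, of ?d]] sd by simp
    then have "crp_table \<sigma> c = crp_table \<sigma> ?d" by (rule T_eq[OF p])
    then have "?d \<in> ?T" using T_self[OF p, of ?d] by simp
    then have "?d \<in> orbit \<sigma>' c" using TO by auto
    from orbit.step[OF this] show ?thesis using s'_in[OF dm] sd by simp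
  qed
  ultimately have "orbit \<sigma>' c = insert (Suc m) ?T" by auto
  then show ?thesis unfolding crp_table_def orbit_altdef_permutation[OF perm'] .
qed

lemma join_in:
  assumes y: "y \<in> insert (Suc m) (crp_table \<sigma> c)"
  shows "crp_table \<sigma>' y = insert (Suc m) (crp_table \<sigma> c)"
proof -
  have y': "y \<in> crp_table \<sigma>' c" using y join_c by simp
  show ?thesis using T_eq[OF p' y'] join_c by simp
qed

lemma tables_join: "crp_tables (Suc m) \<sigma>' = insert (insert (Suc m) (crp_table \<sigma> c)) (crp_tables m \<sigma> - {crp_table \<sigma> c})"
proof -
  let ?T = "crp_table \<sigma> c"
  have Tm: "?T \<subseteq> {1..m}" by (rule T_sub[OF p c])
  have split: "{1..Suc m} = insert (Suc m) ?T \<union> ({1..m} - ?T)" using Tm by auto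
  have a: "crp_table \<sigma>' ` insert (Suc m) ?T = {insert (Suc m) ?T}"
    using join_in by auto
  have b: "crp_table \<sigma>' ` ({1..m} - ?T) = crp_table \<sigma> ` ({1..m} - ?T)"
    using join_other by (intro image_cong) auto
  have c2: "crp_table \<sigma> ` ({1..m} - ?T) = crp_tables m \<sigma> - {?T}"
  proof
    show "crp_table \<sigma> ` ({1..m} - ?T) \<subseteq> crp_tables m \<sigma> - {?T}"
    proof
      fix U assume "U \<in> crp_table \<sigma> ` ({1..m} - ?T)"
      then obtain y where y: "y \<in> {1..m}" "y \<notin> ?T" "U = crp_table \<sigma> y" by auto
      have "U \<noteq> ?T" using y T_self[OF p, of y] by auto
      then show "U \<in> crp_tables m \<sigma> - {?T}" using y unfolding crp_tables_def by auto
    qed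
  next
    show "crp_tables m \<sigma> - {?T} \<subseteq> crp_table \<sigma> ` ({1..m} - ?T)"
    proof
      fix U assume U: "U \<in> crp_tables m \<sigma> - {?T}"
      then have U1: "U \<in> crp_table \<sigma> ` {1..m}" "U \<noteq> ?T" unfolding crp_tables_def by auto
      from U1(1) obtain y where y: "y \<in> {1..m}" "U = crp_table \<sigma> y" by blast
      note y = y U1(2)
      have "y \<notin> ?T" using y T_eq[OF p, of y c] by auto
      then show "U \<in> crp_table \<sigma> ` ({1..m} - ?T)" using y by auto
    qed
  qed
  show ?thesis unfolding crp_tables_def split image_Un a b c2[unfolded crp_tables_def] by simp
qed

end


definition Gam :: "nat \<Rightarrow> (nat \<Rightarrow> nat) set" where
  "Gam m = {a. (\<forall>i. i \<notin> {1..m} \<longrightarrow> a i = 0) \<and> (\<Sum>i=1..m. i * a i) = m}"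

definition ww :: "nat \<Rightarrow> nat \<Rightarrow> real" where
  "ww i k = 1 / (fact k * real i ^ k)"

definition ew :: "nat \<Rightarrow> (nat \<Rightarrow> nat) \<Rightarrow> real" where
  "ew m a = (\<Prod>i=1..m. ww i (a i))"

definition add1' :: "(nat \<Rightarrow> nat) \<Rightarrow> nat \<Rightarrow> nat" where
  "add1' a = a(1 := Suc (a 1))"

definition mv' :: "(nat \<Rightarrow> nat) \<Rightarrow> nat \<Rightarrow> nat \<Rightarrow> nat" where
  "mv' a s = a(s := a s - 1, Suc s := Suc (a (Suc s)))"

lemma Gam_bound: "a \<in> Gam m \<Longrightarrow> a i \<le> m"
proof -
  assume a: "a \<in> Gam m"
  show "a i \<le> m"
  proof (cases "i \<in> {1..m}")
    case True
    have "a i \<le> i * a i" using True by simp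
    also have "\<dots> \<le> (\<Sum>i=1..m. i * a i)" using True by (intro member_le_sum) auto
    finally show ?thesis using a unfolding Gam_def by simp
  next
    case False then show ?thesis using a unfolding Gam_def by simp
  qed
qed

lemma Gam_finite: "finite (Gam m)"
proof -
  have "Gam m \<subseteq> {f. \<forall>x. (x \<in> {0..m} \<longrightarrow> f x \<in> {0..m}) \<and> (x \<notin> {0..m} \<longrightarrow> f x = 0)}"
  proof
    fix a assume a: "a \<in> Gam m"
    have z: "\<forall>i. i \<notin> {1..m} \<longrightarrow> a i = 0" using a unfolding Gam_def by blast
    show "a \<in> {f. \<forall>x. (x \<in> {0..m} \<longrightarrow> f x \<in> {0..m}) \<and> (x \<notin> {0..m} \<longrightarrow> f x = 0)}"
      using Gam_bound[OF a] z by auto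
  qed
  moreover have "finite {f. \<forall>x. (x \<in> {0..m} \<longrightarrow> f x \<in> {0..m}) \<and> (x \<notin> {0..m} \<longrightarrow> f x = (0::nat))}"
    by (rule finite_set_of_finite_funs) auto
  ultimately show ?thesis by (rule finite_subset)
qed

lemma ww0: "ww i 0 = 1" unfolding ww_def by simp

lemma ew_ext: "a \<in> Gam m \<Longrightarrow> m \<le> N \<Longrightarrow> ew N a = ew m a"
proof -
  assume a: "a \<in> Gam m" and N: "m \<le> N"
  have "{1..N} = {1..m} \<union> {Suc m..N}" using N by auto
  moreover have "(\<Prod>i\<in>{Suc m..N}. ww i (a i)) = 1"
    using a unfolding Gam_def by (intro prod.neutral) (auto simp: ww0)
  ultimately show ?thesis unfolding ew_def by (simp add: prod.union_disjoint ivl_disj_int)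
qed

lemma prod_upd:
  fixes f :: "nat \<Rightarrow> nat \<Rightarrow> real"
  assumes "finite I" "k \<in> I"
  shows "(\<Prod>i\<in>I. f i ((a(k := v)) i)) * f k (a k) = (\<Prod>i\<in>I. f i (a i)) * f k v"
proof -
  have "(\<Prod>i\<in>I. f i ((a(k := v)) i)) = f k v * (\<Prod>i\<in>I - {k}. f i (a i))"
    using assms by (simp add: prod.remove)
  moreover have "(\<Prod>i\<in>I. f i (a i)) = f k (a k) * (\<Prod>i\<in>I - {k}. f i (a i))"
    using assms by (simp add: prod.remove)
  ultimately show ?thesis by simp
qed

lemma sum_upd:
  fixes f :: "nat \<Rightarrow> nat \<Rightarrow> nat"
  assumes "finite I" "k \<in> I"
  shows "(\<Sum>i\<in>I. f i ((a(k := v)) i)) + f k (a k) = (\<Sum>i\<in>I. f i (a i)) + f k v"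
proof -
  have "(\<Sum>i\<in>I. f i ((a(k := v)) i)) = f k v + (\<Sum>i\<in>I - {k}. f i (a i))"
    using assms by (simp add: sum.remove)
  moreover have "(\<Sum>i\<in>I. f i (a i)) = f k (a k) + (\<Sum>i\<in>I - {k}. f i (a i))"
    using assms by (simp add: sum.remove)
  ultimately show ?thesis by simp
qed

lemma ww_Suc: "i > 0 \<Longrightarrow> ww i (Suc k) * (real (Suc k) * real i) = ww i k"
proof -
  assume i: "i > 0"
  have "ww i (Suc k) = ww i k / (real (Suc k) * real i)" unfolding ww_def by (simp add: ac_simps)
  then show ?thesis using i by simp
qed


lemma ww_pos: "i > 0 \<Longrightarrow> ww i k > 0"
  unfolding ww_def by simp

lemma Gam_shrink:
  assumes z: "\<forall>i. i \<notin> {1..Suc m} \<longrightarrow> b i = 0" and s: "(\<Sum>i=1..Suc m. i * b i) = m"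
  shows "b \<in> Gam m"
proof -
  have "Suc m * b (Suc m) \<le> (\<Sum>i=1..Suc m. i * b i)" by (intro member_le_sum) auto
  then have bz: "b (Suc m) = 0" using s by (cases "b (Suc m)") auto
  have "(\<Sum>i=1..m. i * b i) = m" using s bz by (simp add: sum.cl_ivl_Suc)
  moreover have "\<forall>i. i \<notin> {1..m} \<longrightarrow> b i = 0" using z bz by (metis atLeastAtMost_iff le_Suc_eq)
  ultimately show ?thesis unfolding Gam_def by simp
qed

lemma Gam_grow:
  assumes a: "a \<in> Gam m"
  shows "(\<Sum>i=1..Suc m. i * a i) = m" "\<forall>i. i \<notin> {1..Suc m} \<longrightarrow> a i = 0" "a (Suc m) = 0"
proof -
  have z: "\<forall>i. i \<notin> {1..m} \<longrightarrow> a i = 0" and s: "(\<Sum>i=1..m. i * a i) = m" using a unfolding Gam_def by auto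
  show az: "a (Suc m) = 0" using z by simp
  show "(\<Sum>i=1..Suc m. i * a i) = m" using s az by (simp add: sum.cl_ivl_Suc)
  show "\<forall>i. i \<notin> {1..Suc m} \<longrightarrow> a i = 0" using z by auto
qed

lemma Gam_SucI:
  assumes z: "\<forall>i. i \<notin> {1..Suc m} \<longrightarrow> b i = 0" and s: "(\<Sum>i=1..Suc m. i * b i) = Suc m"
  shows "b \<in> Gam (Suc m)"
  unfolding Gam_def using z s by simp

lemma cancel3:
  fixes X P w0 w1 S :: real
  assumes "X * w0 = P * w1" "w1 * S = w0"
  shows "X * S * w0 = P * w0"
proof -
  have "X * S * w0 = S * (X * w0)" by (simp add: algebra_simps)
  also have "\<dots> = S * (P * w1)" using assms(1) by simp
  also have "\<dots> = P * (w1 * S)" by (simp add: algebra_simps)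
  also have "\<dots> = P * w0" using assms(2) by simp
  finally show ?thesis .
qed

lemma R1:
  fixes G :: "(nat \<Rightarrow> nat) \<Rightarrow> real"
  shows "(\<Sum>a\<in>Gam m. ew m a * G (add1' a)) = (\<Sum>b\<in>Gam (Suc m). ew (Suc m) b * real (b 1) * G b)"
proof -
  let ?T = "{b \<in> Gam (Suc m). b 1 \<noteq> 0}"
  have "(\<Sum>a\<in>Gam m. ew m a * G (add1' a)) = (\<Sum>b\<in>?T. ew (Suc m) b * real (b 1) * G b)"
  proof (rule sum.reindex_bij_witness[where j = add1' and i = "\<lambda>b. b(1 := b 1 - 1)"])
    fix a assume a: "a \<in> Gam m"
    note g = Gam_grow[OF a]
    show "(add1' a)(1 := add1' a 1 - 1) = a" unfolding add1'_def by auto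
    have "(\<Sum>i=1..Suc m. i * (add1' a) i) + 1 * a 1 = (\<Sum>i=1..Suc m. i * a i) + 1 * Suc (a 1)"
      unfolding add1'_def by (rule sum_upd) auto
    then have s1: "(\<Sum>i=1..Suc m. i * (add1' a) i) = Suc m" using g(1) by simp
    have z1: "\<forall>i. i \<notin> {1..Suc m} \<longrightarrow> add1' a i = 0" using g(2) unfolding add1'_def by auto
    have "add1' a \<in> Gam (Suc m)" by (rule Gam_SucI[OF z1 s1])
    moreover have "add1' a 1 \<noteq> 0" unfolding add1'_def by simp
    ultimately show "add1' a \<in> ?T" by simp
    have "ew (Suc m) (add1' a) * real (Suc (a 1)) = ew m a"
    proof -
      have u: "(\<Prod>i\<in>{1..Suc m}. ww i ((a(1 := Suc (a 1))) i)) * ww 1 (a 1) = (\<Prod>i\<in>{1..Suc m}. ww i (a i)) * ww 1 (Suc (a 1))"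
        by (rule prod_upd) auto
      have v: "ww 1 (Suc (a 1)) * (real (Suc (a 1)) * real 1) = ww 1 (a 1)" by (rule ww_Suc) simp
      have nz: "ww 1 (a 1) \<noteq> 0" using ww_pos[of 1 "a 1"] by simp
      have u': "ew (Suc m) (add1' a) * ww 1 (a 1) = ew (Suc m) a * ww 1 (Suc (a 1))"
        using u unfolding ew_def add1'_def .
      have "ew (Suc m) (add1' a) * real (Suc (a 1)) * ww 1 (a 1) = ew (Suc m) a * ww 1 (a 1)"
        using cancel3[OF u'] v by simp
      then have "ew (Suc m) (add1' a) * real (Suc (a 1)) = ew (Suc m) a" using nz by simp
      also have "\<dots> = ew m a" using ew_ext[OF a, of "Suc m"] by simp
      finally show ?thesis .
    qed
    then show "ew (Suc m) (add1' a) * real (add1' a 1) * G (add1' a) = ew m a * G (add1' a)"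
      unfolding add1'_def by simp
  next
    fix b assume b: "b \<in> ?T"
    then have b1: "b 1 \<noteq> 0" and bG: "b \<in> Gam (Suc m)" by auto
    show "add1' (b(1 := b 1 - 1)) = b" unfolding add1'_def using b1 by (auto simp: fun_eq_iff)
    have zb: "\<forall>i. i \<notin> {1..Suc m} \<longrightarrow> b i = 0" and sb: "(\<Sum>i=1..Suc m. i * b i) = Suc m"
      using bG unfolding Gam_def by auto
    have "(\<Sum>i=1..Suc m. i * (b(1 := b 1 - 1)) i) + 1 * b 1 = (\<Sum>i=1..Suc m. i * b i) + 1 * (b 1 - 1)"
      by (rule sum_upd) auto
    then have "(\<Sum>i=1..Suc m. i * (b(1 := b 1 - 1)) i) = m" using sb b1 by simp
    moreover have "\<forall>i. i \<notin> {1..Suc m} \<longrightarrow> (b(1 := b 1 - 1)) i = 0" using zb by auto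
    ultimately show "b(1 := b 1 - 1) \<in> Gam m" by (rule Gam_shrink[rotated])
  qed
  also have "\<dots> = (\<Sum>b\<in>Gam (Suc m). ew (Suc m) b * real (b 1) * G b)"
    by (rule sum.mono_neutral_left) (auto simp: Gam_finite)
  finally show ?thesis .
qed


lemma R2:
  fixes G :: "(nat \<Rightarrow> nat) \<Rightarrow> real"
  assumes s: "s \<in> {1..m}"
  shows "(\<Sum>a\<in>Gam m. ew m a * (real s * real (a s)) * G (mv' a s))
       = (\<Sum>b\<in>Gam (Suc m). ew (Suc m) b * (real (Suc s) * real (b (Suc s))) * G b)"
proof -
  let ?S = "{a \<in> Gam m. a s \<noteq> 0}"
  let ?T = "{b \<in> Gam (Suc m). b (Suc s) \<noteq> 0}"
  have sS: "s \<in> {1..Suc m}" "Suc s \<in> {1..Suc m}" "s \<noteq> Suc s" using s by auto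
  have "(\<Sum>a\<in>Gam m. ew m a * (real s * real (a s)) * G (mv' a s)) = (\<Sum>a\<in>?S. ew m a * (real s * real (a s)) * G (mv' a s))"
    by (rule sum.mono_neutral_right) (auto simp: Gam_finite)
  also have "\<dots> = (\<Sum>b\<in>?T. ew (Suc m) b * (real (Suc s) * real (b (Suc s))) * G b)"
  proof (rule sum.reindex_bij_witness[where j = "\<lambda>a. mv' a s" and i = "\<lambda>b. b(s := Suc (b s), Suc s := b (Suc s) - 1)"])
    fix a assume a: "a \<in> ?S"
    then have aG: "a \<in> Gam m" and as: "a s \<noteq> 0" by auto
    note g = Gam_grow[OF aG]
    show "(mv' a s)(s := Suc (mv' a s s), Suc s := mv' a s (Suc s) - 1) = a"
      unfolding mv'_def using as sS(3) by (auto simp: fun_eq_iff)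
    define a1 where "a1 = a(s := a s - 1)"
    have m2: "mv' a s = a1(Suc s := Suc (a (Suc s)))" unfolding mv'_def a1_def ..
    have a1S: "a1 (Suc s) = a (Suc s)" unfolding a1_def using sS(3) by simp
    have e1: "(\<Sum>i=1..Suc m. i * a1 i) + s * a s = (\<Sum>i=1..Suc m. i * a i) + s * (a s - 1)"
      unfolding a1_def by (rule sum_upd) (use sS in auto)
    have e2: "(\<Sum>i=1..Suc m. i * (mv' a s) i) + Suc s * a1 (Suc s) = (\<Sum>i=1..Suc m. i * a1 i) + Suc s * Suc (a (Suc s))"
      unfolding m2 by (rule sum_upd) (use sS in auto)
    have sa: "s * (a s - 1) + s = s * a s" using as by (cases "a s") auto
    have sm: "s \<le> m" using s by simp
    have "(\<Sum>i=1..Suc m. i * (mv' a s) i) = Suc m" using e1 e2 g(1) sa sm a1S by simp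
    moreover have "\<forall>i. i \<notin> {1..Suc m} \<longrightarrow> mv' a s i = 0" using g(2) sS unfolding mv'_def by auto
    ultimately have "mv' a s \<in> Gam (Suc m)" by (intro Gam_SucI)
    moreover have "mv' a s (Suc s) \<noteq> 0" unfolding mv'_def by simp
    ultimately show "mv' a s \<in> ?T" by simp
    have u1: "(\<Prod>i\<in>{1..Suc m}. ww i (a1 i)) * ww s (a s) = (\<Prod>i\<in>{1..Suc m}. ww i (a i)) * ww s (a s - 1)"
      unfolding a1_def by (rule prod_upd) (use sS in auto)
    have u2: "(\<Prod>i\<in>{1..Suc m}. ww i (mv' a s i)) * ww (Suc s) (a (Suc s)) = (\<Prod>i\<in>{1..Suc m}. ww i (a1 i)) * ww (Suc s) (Suc (a (Suc s)))"
      unfolding m2 using prod_upd[of "{1..Suc m}" "Suc s" ww a1 "Suc (a (Suc s))"] sS a1S by simp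
    have v1: "ww s (a s) * (real (a s) * real s) = ww s (a s - 1)"
      using ww_Suc[of s "a s - 1"] as s by simp
    have v2: "ww (Suc s) (Suc (a (Suc s))) * (real (Suc (a (Suc s))) * real (Suc s)) = ww (Suc s) (a (Suc s))"
      by (rule ww_Suc) simp
    have nz1: "ww s (a s) \<noteq> 0" using ww_pos[of s "a s"] s by simp
    have nz2: "ww (Suc s) (a (Suc s)) \<noteq> 0" using ww_pos[of "Suc s" "a (Suc s)"] by simp
    have P2: "(\<Prod>i\<in>{1..Suc m}. ww i (mv' a s i)) * (real (Suc (a (Suc s))) * real (Suc s)) = (\<Prod>i\<in>{1..Suc m}. ww i (a1 i))"
      using cancel3[OF u2 v2] nz2 by simp
    have P1: "(\<Prod>i\<in>{1..Suc m}. ww i (a1 i)) = (\<Prod>i\<in>{1..Suc m}. ww i (a i)) * (real (a s) * real s)"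
    proof -
      have "(\<Prod>i\<in>{1..Suc m}. ww i (a1 i)) * ww s (a s) = ((\<Prod>i\<in>{1..Suc m}. ww i (a i)) * (real (a s) * real s)) * ww s (a s)"
        unfolding u1 v1[symmetric] by (simp add: ac_simps)
      then show ?thesis using nz1 by simp
    qed
    have "ew (Suc m) (mv' a s) * (real (Suc s) * real (mv' a s (Suc s))) = ew (Suc m) a * (real s * real (a s))"
      using P1 P2 unfolding ew_def by (simp add: mv'_def ac_simps)
    also have "ew (Suc m) a = ew m a" by (rule ew_ext[OF aG]) simp
    finally show "ew (Suc m) (mv' a s) * (real (Suc s) * real (mv' a s (Suc s))) * G (mv' a s) = ew m a * (real s * real (a s)) * G (mv' a s)"
      by simp
  next
    fix b assume b: "b \<in> ?T"
    then have bG: "b \<in> Gam (Suc m)" and bs: "b (Suc s) \<noteq> 0" by auto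
    define b' where "b' = b(s := Suc (b s), Suc s := b (Suc s) - 1)"
    show "mv' (b(s := Suc (b s), Suc s := b (Suc s) - 1)) s = b"
      unfolding mv'_def using bs sS(3) by (auto simp: fun_eq_iff)
    have zb: "\<forall>i. i \<notin> {1..Suc m} \<longrightarrow> b i = 0" and sb: "(\<Sum>i=1..Suc m. i * b i) = Suc m"
      using bG unfolding Gam_def by auto
    define b1 where "b1 = b(s := Suc (b s))"
    have m2: "b' = b1(Suc s := b (Suc s) - 1)" unfolding b'_def b1_def ..
    have b1S: "b1 (Suc s) = b (Suc s)" unfolding b1_def using sS(3) by simp
    have e1: "(\<Sum>i=1..Suc m. i * b1 i) + s * b s = (\<Sum>i=1..Suc m. i * b i) + s * Suc (b s)"
      unfolding b1_def by (rule sum_upd) (use sS in auto)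
    have e2: "(\<Sum>i=1..Suc m. i * b' i) + Suc s * b1 (Suc s) = (\<Sum>i=1..Suc m. i * b1 i) + Suc s * (b (Suc s) - 1)"
      unfolding m2 by (rule sum_upd) (use sS in auto)
    have sa: "Suc s * (b (Suc s) - 1) + Suc s = Suc s * b (Suc s)" using bs by (cases "b (Suc s)") auto
    have "(\<Sum>i=1..Suc m. i * b' i) = m" using e1 e2 sb sa b1S by simp
    moreover have "\<forall>i. i \<notin> {1..Suc m} \<longrightarrow> b' i = 0" using zb sS unfolding b'_def by auto
    ultimately have "b' \<in> Gam m" by (rule Gam_shrink[rotated])
    moreover have "b' s \<noteq> 0" unfolding b'_def using sS(3) by simp
    ultimately show "b(s := Suc (b s), Suc s := b (Suc s) - 1) \<in> ?S" unfolding b'_def by simp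
  qed
  also have "\<dots> = (\<Sum>b\<in>Gam (Suc m). ew (Suc m) b * (real (Suc s) * real (b (Suc s))) * G b)"
    by (rule sum.mono_neutral_left) (auto simp: Gam_finite)
  finally show ?thesis .
qed


lemma Gam_Suc_sum:
  assumes b: "b \<in> Gam (Suc m)"
  shows "real (b 1) + (\<Sum>s=1..m. real (Suc s) * real (b (Suc s))) = real (Suc m)"
proof -
  have "(\<Sum>i=1..Suc m. i * b i) = Suc m" using b unfolding Gam_def by simp
  moreover have "(\<Sum>i=1..Suc m. i * b i) = b 1 + (\<Sum>i=Suc 1..Suc m. i * b i)"
    by (simp add: sum.atLeast_Suc_atMost)
  moreover have "(\<Sum>i=Suc 1..Suc m. i * b i) = (\<Sum>s=1..m. Suc s * b (Suc s))"
    by (rule sum.shift_bounds_cl_Suc_ivl)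
  ultimately have "b 1 + (\<Sum>s=1..m. Suc s * b (Suc s)) = Suc m" by simp
  then have "real (b 1 + (\<Sum>s=1..m. Suc s * b (Suc s))) = real (Suc m)" by simp
  then show ?thesis by (simp only: of_nat_add of_nat_sum of_nat_mult)
qed

lemma EW_step:
  fixes G :: "(nat \<Rightarrow> nat) \<Rightarrow> real"
  shows "(\<Sum>a\<in>Gam m. ew m a * ((G (add1' a) + (\<Sum>s=1..m. real s * real (a s) * G (mv' a s))) / real (Suc m)))
       = (\<Sum>b\<in>Gam (Suc m). ew (Suc m) b * G b)"
proof -
  have "(\<Sum>a\<in>Gam m. ew m a * ((G (add1' a) + (\<Sum>s=1..m. real s * real (a s) * G (mv' a s))) / real (Suc m)))
      = ((\<Sum>a\<in>Gam m. ew m a * G (add1' a)) + (\<Sum>s=1..m. \<Sum>a\<in>Gam m. ew m a * (real s * real (a s)) * G (mv' a s))) / real (Suc m)"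
    by (simp add: sum_divide_distrib[symmetric] sum.distrib distrib_left sum_distrib_left mult.assoc
        add_divide_distrib) (rule sum.swap)
  also have "\<dots> = ((\<Sum>b\<in>Gam (Suc m). ew (Suc m) b * real (b 1) * G b)
        + (\<Sum>s=1..m. \<Sum>b\<in>Gam (Suc m). ew (Suc m) b * (real (Suc s) * real (b (Suc s))) * G b)) / real (Suc m)"
    by (simp add: R1 R2)
  also have "\<dots> = (\<Sum>b\<in>Gam (Suc m). ew (Suc m) b * G b * (real (b 1) + (\<Sum>s=1..m. real (Suc s) * real (b (Suc s))))) / real (Suc m)"
    by (simp add: sum_distrib_left distrib_left sum.distrib ac_simps) (rule sum.swap)
  also have "\<dots> = (\<Sum>b\<in>Gam (Suc m). ew (Suc m) b * G b * real (Suc m)) / real (Suc m)"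
  proof -
    have e: "\<And>b. b \<in> Gam (Suc m) \<Longrightarrow> ew (Suc m) b * G b * (real (b 1) + (\<Sum>s=1..m. real (Suc s) * real (b (Suc s))))
        = ew (Suc m) b * G b * real (Suc m)"
    proof -
      fix b assume "b \<in> Gam (Suc m)"
      then show "ew (Suc m) b * G b * (real (b 1) + (\<Sum>s=1..m. real (Suc s) * real (b (Suc s)))) = ew (Suc m) b * G b * real (Suc m)"
        by (simp only: Gam_Suc_sum)
    qed
    show ?thesis using sum.cong[OF refl e] by simp
  qed
  also have "\<dots> = (\<Sum>b\<in>Gam (Suc m). ew (Suc m) b * G b)"
    by (simp add: sum_distrib_right[symmetric])
  finally show ?thesis .
qed


definition cnt :: "nat \<Rightarrow> (nat \<Rightarrow> nat) \<Rightarrow> nat \<Rightarrow> nat" where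
  "cnt m \<sigma> = (\<lambda>i. crp_A m i \<sigma>)"


lemma tables_finite: "finite (crp_tables m \<sigma>)"
  unfolding crp_tables_def by simp

lemma card_insert_filter:
  assumes "finite A" "x \<notin> A"
  shows "card {U \<in> insert x A. P U} = card {U \<in> A. P U} + (if P x then 1 else 0)"
proof -
  have "{U \<in> insert x A. P U} = (if P x then insert x {U \<in> A. P U} else {U \<in> A. P U})" by auto
  then show ?thesis using assms by auto
qed

context
  fixes \<sigma> :: "nat \<Rightarrow> nat" and m :: nat
  assumes p: "\<sigma> permutes {1..m}"
begin

lemma new_notin: "{Suc m} \<notin> crp_tables m \<sigma>"
proof
  assume "{Suc m} \<in> crp_tables m \<sigma>"
  then have "{Suc m} \<subseteq> {1..m}" by (rule tables_sub[OF p])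
  then show False by auto
qed

lemma cnt_new: "cnt (Suc m) \<sigma> = add1' (cnt m \<sigma>)"
proof
  fix i
  show "cnt (Suc m) \<sigma> i = add1' (cnt m \<sigma>) i"
    unfolding cnt_def add1'_def crp_A_def tables_new[OF p]
    using card_insert_filter[OF tables_finite new_notin, of "\<lambda>T. card T = i"] by auto
qed

lemma K_new: "crp_K (Suc m) \<sigma> = Suc (crp_K m \<sigma>)"
  unfolding crp_K_def tables_new[OF p] using new_notin tables_finite by simp

lemma K_sum: "crp_K m \<sigma> = (\<Sum>i=1..m. crp_A m i \<sigma>)"
proof -
  have "crp_K m \<sigma> = (\<Sum>T\<in>crp_tables m \<sigma>. 1)" unfolding crp_K_def by simp
  also have "\<dots> = (\<Sum>i\<in>{1..m}. \<Sum>T\<in>{T \<in> crp_tables m \<sigma>. card T = i}. 1)"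
    using tables_card[OF p] by (intro sum.group[symmetric]) (auto simp: tables_finite)
  also have "\<dots> = (\<Sum>i=1..m. crp_A m i \<sigma>)" unfolding crp_A_def by simp
  finally show ?thesis .
qed

lemma sum_by_table:
  fixes \<phi> :: "nat \<Rightarrow> real"
  shows "(\<Sum>c\<in>{1..m}. \<phi> (card (crp_table \<sigma> c))) = (\<Sum>s=1..m. real s * real (crp_A m s \<sigma>) * \<phi> s)"
proof -
  have "(\<Sum>c\<in>{1..m}. \<phi> (card (crp_table \<sigma> c)))
      = (\<Sum>U\<in>crp_tables m \<sigma>. \<Sum>c\<in>{c \<in> {1..m}. crp_table \<sigma> c = U}. \<phi> (card (crp_table \<sigma> c)))"
    unfolding crp_tables_def by (intro sum.group[symmetric]) auto
  also have "\<dots> = (\<Sum>U\<in>crp_tables m \<sigma>. real (card U) * \<phi> (card U))"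
  proof (rule sum.cong[OF refl])
    fix U assume U: "U \<in> crp_tables m \<sigma>"
    then obtain d where d: "d \<in> {1..m}" "U = crp_table \<sigma> d" unfolding crp_tables_def by auto
    have "{c \<in> {1..m}. crp_table \<sigma> c = U} = U"
    proof
      show "{c \<in> {1..m}. crp_table \<sigma> c = U} \<subseteq> U" using T_self[OF p] by auto
      show "U \<subseteq> {c \<in> {1..m}. crp_table \<sigma> c = U}"
        using d T_eq[OF p] T_sub[OF p d(1)] by auto
    qed
    moreover have "(\<Sum>c\<in>U. \<phi> (card (crp_table \<sigma> c))) = (\<Sum>c\<in>U. \<phi> (card U))"
      by (rule sum.cong[OF refl]) (use d T_eq[OF p] in auto)
    ultimately show "(\<Sum>c\<in>{c \<in> {1..m}. crp_table \<sigma> c = U}. \<phi> (card (crp_table \<sigma> c))) = real (card U) * \<phi> (card U)"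
      by simp
  qed
  also have "\<dots> = (\<Sum>s\<in>{1..m}. \<Sum>U\<in>{U \<in> crp_tables m \<sigma>. card U = s}. real (card U) * \<phi> (card U))"
    using tables_card[OF p] by (intro sum.group[symmetric]) (auto simp: tables_finite)
  also have "\<dots> = (\<Sum>s=1..m. real s * real (crp_A m s \<sigma>) * \<phi> s)"
    unfolding crp_A_def by (intro sum.cong refl) simp
  finally show ?thesis .
qed

end

context
  fixes \<sigma> :: "nat \<Rightarrow> nat" and m c :: nat
  assumes p: "\<sigma> permutes {1..m}" and c: "c \<in> {1..m}"
begin

lemma join_notin: "insert (Suc m) (crp_table \<sigma> c) \<notin> crp_tables m \<sigma> - {crp_table \<sigma> c}"
proof
  assume "insert (Suc m) (crp_table \<sigma> c) \<in> crp_tables m \<sigma> - {crp_table \<sigma> c}"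
  then have "insert (Suc m) (crp_table \<sigma> c) \<subseteq> {1..m}" using tables_sub[OF p] by blast
  then show False by auto
qed

lemma cnt_join: "cnt (Suc m) (sit_left \<sigma> (Suc m) c) = mv' (cnt m \<sigma>) (card (crp_table \<sigma> c))"
proof
  fix i
  let ?T = "crp_table \<sigma> c"
  let ?s = "card ?T"
  have Tin: "?T \<in> crp_tables m \<sigma>" unfolding crp_tables_def using c by auto
  have fT: "finite ?T" by (rule T_finite[OF p])
  have xT: "Suc m \<notin> ?T" using T_sub[OF p c] by auto
  have ci: "card (insert (Suc m) ?T) = Suc ?s" using fT xT by simp
  have f2: "finite (crp_tables m \<sigma> - {?T})" using tables_finite by simp
  have A1: "card {U \<in> crp_tables m \<sigma> - {?T}. card U = i} = crp_A m i \<sigma> - (if ?s = i then 1 else 0)"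
  proof -
    have "{U \<in> crp_tables m \<sigma> - {?T}. card U = i} = {U \<in> crp_tables m \<sigma>. card U = i} - {?T}" by auto
    then show ?thesis unfolding crp_A_def using Tin tables_finite by (simp add: card_Diff_singleton_if)
  qed
  have As: "crp_A m ?s \<sigma> \<ge> 1"
  proof -
    have "?T \<in> {U \<in> crp_tables m \<sigma>. card U = ?s}" using Tin by simp
    moreover have "finite {U \<in> crp_tables m \<sigma>. card U = ?s}" using tables_finite by simp
    ultimately have "card {U \<in> crp_tables m \<sigma>. card U = ?s} > 0" using card_gt_0_iff by blast
    then show ?thesis unfolding crp_A_def by simp
  qed
  have "cnt (Suc m) (sit_left \<sigma> (Suc m) c) i
      = card {U \<in> crp_tables m \<sigma> - {?T}. card U = i} + (if Suc ?s = i then 1 else 0)"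
    unfolding cnt_def crp_A_def[of "Suc m"] \<sigma>'_def[OF p c, symmetric] tables_join[OF p c]
    using card_insert_filter[OF f2 join_notin[unfolded \<sigma>'_def], of "\<lambda>T. card T = i"] ci by simp
  also have "\<dots> = mv' (cnt m \<sigma>) ?s i"
    unfolding A1 mv'_def cnt_def using As by auto
  finally show "cnt (Suc m) (sit_left \<sigma> (Suc m) c) i = mv' (cnt m \<sigma>) ?s i" .
qed

lemma K_join: "crp_K (Suc m) (sit_left \<sigma> (Suc m) c) = crp_K m \<sigma>"
proof -
  have Tin: "crp_table \<sigma> c \<in> crp_tables m \<sigma>" unfolding crp_tables_def using c by auto
  have "card (crp_tables m \<sigma>) > 0" using Tin tables_finite card_gt_0_iff by blast
  then show ?thesis
    unfolding crp_K_def \<sigma>'_def[OF p c, symmetric] tables_join[OF p c]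
    using join_notin tables_finite Tin by (simp add: card_Diff_singleton)
qed

end


lemma E_crp_Suc:
  fixes F :: "(nat \<Rightarrow> nat) \<Rightarrow> real"
  shows "measure_pmf.expectation (crp (Suc m)) F =
    measure_pmf.expectation (crp m) (\<lambda>\<sigma>. (\<Sum>c\<in>{1..Suc m}. F (if c = Suc m then \<sigma> else sit_left \<sigma> (Suc m) c)) / real (Suc m))"
proof -
  have "measure_pmf.expectation (crp (Suc m)) F = measure_pmf.expectation (crp m)
      (\<lambda>\<sigma>. measure_pmf.expectation (pmf_of_set {1..Suc m} \<bind> (\<lambda>c. return_pmf (if c = Suc m then \<sigma> else sit_left \<sigma> (Suc m) c))) F)"
    unfolding crp.simps by (rule EB) (auto simp: crp_finite)
  also have "\<dots> = measure_pmf.expectation (crp m) (\<lambda>\<sigma>. (\<Sum>c\<in>{1..Suc m}. F (if c = Suc m then \<sigma> else sit_left \<sigma> (Suc m) c)) / real (Suc m))"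
  proof (rule E_cong)
    fix \<sigma>
    show "measure_pmf.expectation (pmf_of_set {1..Suc m} \<bind> (\<lambda>c. return_pmf (if c = Suc m then \<sigma> else sit_left \<sigma> (Suc m) c))) F
        = (\<Sum>c\<in>{1..Suc m}. F (if c = Suc m then \<sigma> else sit_left \<sigma> (Suc m) c)) / real (Suc m)"
      by (subst pmf_expectation_bind_pmf_of_set) (auto simp: sum_divide_distrib sum_distrib_left[symmetric] divide_inverse_commute add_divide_distrib)
  qed
  finally show ?thesis .
qed

lemma sum_split_Suc: "(\<Sum>c\<in>{1..Suc m}. f c) = f (Suc m) + (\<Sum>c\<in>{1..m}. f c)"
  by (simp add: sum.cl_ivl_Suc add.commute)

lemma K_law:
  fixes g :: "nat \<Rightarrow> real"
  shows "measure_pmf.expectation (crp m) (\<lambda>\<sigma>. g (crp_K m \<sigma>)) = (\<Sum>k=0..m. uu m k * g k)"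
proof (induction m arbitrary: g)
  case 0
  show ?case by (simp add: crp_K_def crp_tables_def)
next
  case (Suc m)
  have "measure_pmf.expectation (crp (Suc m)) (\<lambda>\<sigma>. g (crp_K (Suc m) \<sigma>))
      = measure_pmf.expectation (crp m) (\<lambda>\<sigma>. (g (Suc (crp_K m \<sigma>)) + real m * g (crp_K m \<sigma>)) / real (Suc m))"
    unfolding E_crp_Suc
  proof (rule E_cong)
    fix \<sigma> assume "\<sigma> \<in> set_pmf (crp m)"
    then have p: "\<sigma> permutes {1..m}" by (rule crp_perm)
    have "(\<Sum>c\<in>{1..m}. g (crp_K (Suc m) (if c = Suc m then \<sigma> else sit_left \<sigma> (Suc m) c))) = (\<Sum>c\<in>{1..m}. g (crp_K m \<sigma>))"
      by (intro sum.cong refl) (auto simp: K_join[OF p])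
    then show "(\<Sum>c\<in>{1..Suc m}. g (crp_K (Suc m) (if c = Suc m then \<sigma> else sit_left \<sigma> (Suc m) c))) / real (Suc m)
        = (g (Suc (crp_K m \<sigma>)) + real m * g (crp_K m \<sigma>)) / real (Suc m)"
      unfolding sum_split_Suc by (simp add: K_new[OF p])
  qed
  also have "\<dots> = (\<Sum>k=0..m. uu m k * ((g (Suc k) + real m * g k) / real (Suc m)))"
    by (rule Suc.IH)
  also have "\<dots> = (\<Sum>k=0..Suc m. uu (Suc m) k * g k)"
    by (rule uu_step_sum[symmetric])
  finally show ?case .
qed


lemma Gam_0: "Gam 0 = {\<lambda>_. 0}"
  unfolding Gam_def by (auto simp: fun_eq_iff)

lemma Ewens_law:
  fixes G :: "(nat \<Rightarrow> nat) \<Rightarrow> real"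
  shows "measure_pmf.expectation (crp m) (\<lambda>\<sigma>. G (cnt m \<sigma>)) = (\<Sum>a\<in>Gam m. ew m a * G a)"
proof (induction m arbitrary: G)
  case 0
  have "cnt 0 id = (\<lambda>_. 0)" unfolding cnt_def crp_A_def crp_tables_def by simp
  then show ?case by (simp add: Gam_0 ew_def)
next
  case (Suc m)
  define H where "H a = (G (add1' a) + (\<Sum>s=1..m. real s * real (a s) * G (mv' a s))) / real (Suc m)" for a
  have "measure_pmf.expectation (crp (Suc m)) (\<lambda>\<sigma>. G (cnt (Suc m) \<sigma>))
      = measure_pmf.expectation (crp m) (\<lambda>\<sigma>. H (cnt m \<sigma>))"
    unfolding E_crp_Suc
  proof (rule E_cong)
    fix \<sigma> assume "\<sigma> \<in> set_pmf (crp m)"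
    then have p: "\<sigma> permutes {1..m}" by (rule crp_perm)
    have "(\<Sum>c\<in>{1..m}. G (cnt (Suc m) (if c = Suc m then \<sigma> else sit_left \<sigma> (Suc m) c)))
        = (\<Sum>c\<in>{1..m}. G (mv' (cnt m \<sigma>) (card (crp_table \<sigma> c))))"
      by (intro sum.cong refl) (auto simp: cnt_join[OF p])
    also have "\<dots> = (\<Sum>s=1..m. real s * real (crp_A m s \<sigma>) * G (mv' (cnt m \<sigma>) s))"
      by (rule sum_by_table[OF p])
    also have "\<dots> = (\<Sum>s=1..m. real s * real (cnt m \<sigma> s) * G (mv' (cnt m \<sigma>) s))"
      by (simp add: cnt_def)
    finally show "(\<Sum>c\<in>{1..Suc m}. G (cnt (Suc m) (if c = Suc m then \<sigma> else sit_left \<sigma> (Suc m) c))) / real (Suc m)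
        = H (cnt m \<sigma>)"
      unfolding sum_split_Suc H_def by (simp add: cnt_new[OF p])
  qed
  also have "\<dots> = (\<Sum>a\<in>Gam m. ew m a * H a)" by (rule Suc.IH)
  also have "\<dots> = (\<Sum>b\<in>Gam (Suc m). ew (Suc m) b * G b)" unfolding H_def by (rule EW_step)
  finally show ?case .
qed


lemma Gam_shrink2:
  assumes MN: "M \<le> N" and z: "\<forall>i. i \<notin> {1..N} \<longrightarrow> b i = 0" and s: "(\<Sum>i=1..N. i * b i) = M"
  shows "b \<in> Gam M"
proof -
  have bz: "\<And>i. i \<in> {Suc M..N} \<Longrightarrow> b i = 0"
  proof -
    fix i assume i: "i \<in> {Suc M..N}"
    have "i * b i \<le> (\<Sum>i=1..N. i * b i)" using i by (intro member_le_sum) auto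
    then have "i * b i \<le> M" using s by simp
    then show "b i = 0" using i by (cases "b i") auto
  qed
  have "(\<Sum>i=1..N. i * b i) = (\<Sum>i=1..M. i * b i)"
    using MN bz by (intro sum.mono_neutral_right) auto
  moreover have "\<forall>i. i \<notin> {1..M} \<longrightarrow> b i = 0" using z bz by (metis atLeastAtMost_iff not_less_eq_eq)
  ultimately show ?thesis unfolding Gam_def using s by simp
qed

lemma Gam_sum_ext:
  fixes f :: "nat \<Rightarrow> nat \<Rightarrow> 'b::comm_monoid_add"
  assumes b: "b \<in> Gam M" and MN: "M \<le> N" and f0: "\<And>i. f i 0 = 0"
  shows "(\<Sum>i=1..N. f i (b i)) = (\<Sum>i=1..M. f i (b i))"
proof -
  have z: "\<forall>i. i \<notin> {1..M} \<longrightarrow> b i = 0" using b unfolding Gam_def by simp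
  show ?thesis using MN z f0 by (intro sum.mono_neutral_right) auto
qed

lemma JB:
  assumes j: "j \<in> {1..m}"
  shows "(\<Sum>a\<in>Gam m. ew m a * (real (a j) / real (\<Sum>i=1..m. a i)))
       = 1 / real j * (\<Sum>b\<in>Gam (m - j). ew (m - j) b * (1 / (1 + real (\<Sum>i=1..m - j. b i))))"
proof -
  let ?S = "{a \<in> Gam m. a j \<noteq> 0}"
  have j0: "j > 0" using j by simp
  have "1 / real j * (\<Sum>b\<in>Gam (m - j). ew (m - j) b * (1 / (1 + real (\<Sum>i=1..m - j. b i))))
      = (\<Sum>b\<in>Gam (m - j). 1 / real j * (ew (m - j) b * (1 / (1 + real (\<Sum>i=1..m - j. b i)))))"
    by (simp add: sum_distrib_left)
  also have "\<dots> = (\<Sum>a\<in>?S. ew m a * (real (a j) / real (\<Sum>i=1..m. a i)))"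
  proof (rule sum.reindex_bij_witness[where j = "\<lambda>b. b(j := Suc (b j))" and i = "\<lambda>a. a(j := a j - 1)"])
    fix b assume b: "b \<in> Gam (m - j)"
    show "(b(j := Suc (b j)))(j := (b(j := Suc (b j))) j - 1) = b" by auto
    have zb: "\<forall>i. i \<notin> {1..m - j} \<longrightarrow> b i = 0" using b unfolding Gam_def by simp
    have sb: "(\<Sum>i=1..m. i * b i) = m - j"
      using Gam_sum_ext[OF b, of m "\<lambda>i x. i * x"] b unfolding Gam_def by simp
    have e: "(\<Sum>i=1..m. i * (b(j := Suc (b j))) i) + j * b j = (\<Sum>i=1..m. i * b i) + j * Suc (b j)"
      by (rule sum_upd) (use j in auto)
    have "(\<Sum>i=1..m. i * (b(j := Suc (b j))) i) = m" using e sb j by simp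
    moreover have "\<forall>i. i \<notin> {1..m} \<longrightarrow> (b(j := Suc (b j))) i = 0" using zb j by auto
    ultimately have "b(j := Suc (b j)) \<in> Gam m" unfolding Gam_def by simp
    then show "b(j := Suc (b j)) \<in> ?S" by simp
    have ssum: "(\<Sum>i=1..m. (b(j := Suc (b j))) i) = Suc (\<Sum>i=1..m - j. b i)"
    proof -
      have "(\<Sum>i=1..m. (b(j := Suc (b j))) i) + b j = (\<Sum>i=1..m. b i) + Suc (b j)"
        using sum_upd[of "{1..m}" j "\<lambda>i x. x" b "Suc (b j)"] j by simp
      moreover have "(\<Sum>i=1..m. b i) = (\<Sum>i=1..m - j. b i)"
        using Gam_sum_ext[OF b, of m "\<lambda>i x. x"] by simp
      ultimately show ?thesis by simp
    qed
    have u: "(\<Prod>i\<in>{1..m}. ww i ((b(j := Suc (b j))) i)) * ww j (b j) = (\<Prod>i\<in>{1..m}. ww i (b i)) * ww j (Suc (b j))"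
      by (rule prod_upd) (use j in auto)
    have v: "ww j (Suc (b j)) * (real (Suc (b j)) * real j) = ww j (b j)" by (rule ww_Suc[OF j0])
    have nz: "ww j (b j) \<noteq> 0" using ww_pos[OF j0, of "b j"] by simp
    have w: "ew m (b(j := Suc (b j))) * (real (Suc (b j)) * real j) = ew m b"
      using cancel3[OF u v] nz unfolding ew_def by simp
    have ee: "ew m b = ew (m - j) b" by (rule ew_ext[OF b]) simp
    have "ew m (b(j := Suc (b j))) * real (Suc (b j)) = ew (m - j) b / real j"
      using w ee j0 by (simp add: field_simps)
    then show "ew m (b(j := Suc (b j))) * (real ((b(j := Suc (b j))) j) / real (\<Sum>i=1..m. (b(j := Suc (b j))) i))
        = 1 / real j * (ew (m - j) b * (1 / (1 + real (\<Sum>i=1..m - j. b i))))"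
      unfolding ssum by simp
  next
    fix a assume a: "a \<in> ?S"
    then have aG: "a \<in> Gam m" and aj: "a j \<noteq> 0" by auto
    show "(a(j := a j - 1))(j := Suc ((a(j := a j - 1)) j)) = a" using aj by auto
    have za: "\<forall>i. i \<notin> {1..m} \<longrightarrow> a i = 0" and sa: "(\<Sum>i=1..m. i * a i) = m" using aG unfolding Gam_def by auto
    have e: "(\<Sum>i=1..m. i * (a(j := a j - 1)) i) + j * a j = (\<Sum>i=1..m. i * a i) + j * (a j - 1)"
      by (rule sum_upd) (use j in auto)
    have ja: "j * (a j - 1) + j = j * a j" using aj by (cases "a j") auto
    have "(\<Sum>i=1..m. i * (a(j := a j - 1)) i) = m - j" using e sa ja by simp
    moreover have "\<forall>i. i \<notin> {1..m} \<longrightarrow> (a(j := a j - 1)) i = 0" using za j by auto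
    moreover have "m - j \<le> m" by simp
    ultimately show "a(j := a j - 1) \<in> Gam (m - j)" using Gam_shrink2 by blast
  qed
  also have "\<dots> = (\<Sum>a\<in>Gam m. ew m a * (real (a j) / real (\<Sum>i=1..m. a i)))"
    by (rule sum.mono_neutral_left) (auto simp: Gam_finite)
  finally show ?thesis by simp
qed


lemma Gamma_reindex:
  assumes n: "n \<ge> 2" and j: "j \<in> {1..n - 1}"
  shows "(\<Sum>a\<in>Gam (n - 1). ew (n - 1) a * (real (a j) / real (\<Sum>i=1..n-1. a i)))
     = (\<Sum>a\<in>Gamma_set n. real (a j) / real (\<Sum>i=1..n-1. a i) * (\<Prod>i=1..n-1. 1 / (fact (a i) * real i ^ a i)))"
proof (rule sum.reindex_bij_witness[where j = "\<lambda>a. restrict a {1..n-1}" and i = "\<lambda>b i. if i \<in> {1..n-1} then b i else 0"])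
  fix a assume a: "a \<in> Gam (n - 1)"
  have za: "\<forall>i. i \<notin> {1..n-1} \<longrightarrow> a i = 0" and sa: "(\<Sum>i=1..n-1. i * a i) = n - 1" using a unfolding Gam_def by auto
  show "(\<lambda>i. if i \<in> {1..n - 1} then restrict a {1..n - 1} i else 0) = a" using za by (auto simp: fun_eq_iff)
  have "restrict a {1..n-1} \<in> {1..n-1} \<rightarrow>\<^sub>E {0..n-1}" using Gam_bound[OF a] by auto
  moreover have "(\<Sum>i=1..n-1. i * restrict a {1..n-1} i) = n - 1" using sa by simp
  ultimately show "restrict a {1..n-1} \<in> Gamma_set n" unfolding Gamma_set_def by simp
  show "real (restrict a {1..n-1} j) / real (\<Sum>i=1..n-1. restrict a {1..n-1} i) * (\<Prod>i=1..n-1. 1 / (fact (restrict a {1..n-1} i) * real i ^ restrict a {1..n-1} i))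
      = ew (n - 1) a * (real (a j) / real (\<Sum>i=1..n-1. a i))"
    using j unfolding ew_def ww_def by simp
next
  fix b assume b: "b \<in> Gamma_set n"
  then have bP: "b \<in> {1..n-1} \<rightarrow>\<^sub>E {0..n-1}" and sb: "(\<Sum>i=1..n-1. i * b i) = n - 1" unfolding Gamma_set_def by auto
  show "restrict (\<lambda>i. if i \<in> {1..n - 1} then b i else 0) {1..n - 1} = b"
    using bP by (auto simp: fun_eq_iff restrict_def PiE_def extensional_def)
  show "(\<lambda>i. if i \<in> {1..n - 1} then b i else 0) \<in> Gam (n - 1)"
    unfolding Gam_def using sb by simp
qed

theorem lemma2p3:
  fixes n j :: nat
  assumes "n \<ge> 2" and "1 \<le> j" and "j \<le> n - 1"
  shows
    "minclade_prob n (j + 1) =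
       measure_pmf.expectation (crp (n - 1))
         (\<lambda>\<sigma>. real (crp_A (n - 1) j \<sigma>) / real (crp_K (n - 1) \<sigma>))
   \<and> measure_pmf.expectation (crp (n - 1))
         (\<lambda>\<sigma>. real (crp_A (n - 1) j \<sigma>) / real (crp_K (n - 1) \<sigma>)) =
       (\<Sum>a\<in>Gamma_set n. real (a j) / real (\<Sum>i=1..n-1. a i) *
          (\<Prod>i=1..n-1. 1 / (fact (a i) * real i ^ a i)))
   \<and> (j < n - 1 \<longrightarrow>
       minclade_prob n (j + 1) =
         1 / real j * (\<Sum>k=1..n-1-j. 1 / fact (k + 1) *
            (\<Sum>v\<in>Delta_set (n - 1 - j) k. 1 / (\<Prod>i=1..k. real (v i)))))
   \<and> minclade_prob n n = 1 / real (n - 1)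
   \<and> minclade_prob n (j + 1) =
       1 / real j * measure_pmf.expectation (crp (n - 1 - j))
         (\<lambda>\<sigma>. 1 / (1 + real (crp_K (n - 1 - j) \<sigma>)))
   \<and> measure_pmf.expectation (crp (n - 1 - j))
         (\<lambda>\<sigma>. 1 / (1 + real (crp_K (n - 1 - j) \<sigma>))) =
       measure_pmf.expectation (bern_seq (n - 1 - j))
         (\<lambda>b. 1 / (1 + (\<Sum>i=1..n-1-j. (if b i then 1 else 0 :: real))))"
proof -
  note n = assms(1) and j = assms(2,3)
  define m where "m = n - 1"
  have jm: "j \<in> {1..m}" using j unfolding m_def by simp
  have MF: "minclade_prob n (j + 1) = ff (n - 1 - j) / real j" by (rule minclade_formula[OF n j])
  have KL: "\<And>m'. measure_pmf.expectation (crp m') (\<lambda>\<sigma>. 1 / (1 + real (crp_K m' \<sigma>))) = ff m'"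
  proof -
    fix m'
    show "measure_pmf.expectation (crp m') (\<lambda>\<sigma>. 1 / (1 + real (crp_K m' \<sigma>))) = ff m'"
      using K_law[of m' "\<lambda>k. 1 / (1 + real k)"] unfolding ff_def by (simp add: add.commute)
  qed
  have BL: "\<And>m'. measure_pmf.expectation (bern_seq m') (\<lambda>b. 1 / (1 + (\<Sum>i=1..m'. (if b i then 1 else 0 :: real)))) = ff m'"
  proof -
    fix m'
    show "measure_pmf.expectation (bern_seq m') (\<lambda>b. 1 / (1 + (\<Sum>i=1..m'. (if b i then 1 else 0 :: real)))) = ff m'"
      using bern_law[of m' "\<lambda>x. 1 / (1 + x)"] unfolding ff_def by (simp add: add.commute)
  qed
  have E1: "measure_pmf.expectation (crp m) (\<lambda>\<sigma>. real (crp_A m j \<sigma>) / real (crp_K m \<sigma>))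
      = (\<Sum>a\<in>Gam m. ew m a * (real (a j) / real (\<Sum>i=1..m. a i)))"
  proof -
    have "measure_pmf.expectation (crp m) (\<lambda>\<sigma>. real (crp_A m j \<sigma>) / real (crp_K m \<sigma>))
        = measure_pmf.expectation (crp m) (\<lambda>\<sigma>. (\<lambda>a. real (a j) / real (\<Sum>i=1..m. a i)) (cnt m \<sigma>))"
      by (rule E_cong) (simp add: cnt_def K_sum[OF crp_perm])
    also have "\<dots> = (\<Sum>a\<in>Gam m. ew m a * (real (a j) / real (\<Sum>i=1..m. a i)))" by (rule Ewens_law)
    finally show ?thesis .
  qed
  have E2: "measure_pmf.expectation (crp (m - j)) (\<lambda>\<sigma>. 1 / (1 + real (crp_K (m - j) \<sigma>)))
      = (\<Sum>b\<in>Gam (m - j). ew (m - j) b * (1 / (1 + real (\<Sum>i=1..m - j. b i))))"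
  proof -
    have "measure_pmf.expectation (crp (m - j)) (\<lambda>\<sigma>. 1 / (1 + real (crp_K (m - j) \<sigma>)))
        = measure_pmf.expectation (crp (m - j)) (\<lambda>\<sigma>. (\<lambda>b. 1 / (1 + real (\<Sum>i=1..m - j. b i))) (cnt (m - j) \<sigma>))"
      by (rule E_cong) (simp add: cnt_def K_sum[OF crp_perm])
    also have "\<dots> = (\<Sum>b\<in>Gam (m - j). ew (m - j) b * (1 / (1 + real (\<Sum>i=1..m - j. b i))))" by (rule Ewens_law)
    finally show ?thesis .
  qed
  have EA: "measure_pmf.expectation (crp m) (\<lambda>\<sigma>. real (crp_A m j \<sigma>) / real (crp_K m \<sigma>)) = ff (m - j) / real j"
    unfolding E1 JB[OF jm] E2[symmetric] KL by simp
  have c1: "minclade_prob n (j + 1) = measure_pmf.expectation (crp (n - 1)) (\<lambda>\<sigma>. real (crp_A (n - 1) j \<sigma>) / real (crp_K (n - 1) \<sigma>))"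
    using MF EA unfolding m_def by simp
  have c2: "measure_pmf.expectation (crp (n - 1)) (\<lambda>\<sigma>. real (crp_A (n - 1) j \<sigma>) / real (crp_K (n - 1) \<sigma>)) =
       (\<Sum>a\<in>Gamma_set n. real (a j) / real (\<Sum>i=1..n-1. a i) * (\<Prod>i=1..n-1. 1 / (fact (a i) * real i ^ a i)))"
    using E1 Gamma_reindex[OF n, of j] jm unfolding m_def by simp
  have c3: "j < n - 1 \<longrightarrow> minclade_prob n (j + 1) =
         1 / real j * (\<Sum>k=1..n-1-j. 1 / fact (k + 1) * (\<Sum>v\<in>Delta_set (n - 1 - j) k. 1 / (\<Prod>i=1..k. real (v i))))"
  proof
    assume "j < n - 1"
    then have "n - 1 - j \<ge> 1" by simp
    then show "minclade_prob n (j + 1) =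
         1 / real j * (\<Sum>k=1..n-1-j. 1 / fact (k + 1) * (\<Sum>v\<in>Delta_set (n - 1 - j) k. 1 / (\<Prod>i=1..k. real (v i))))"
      using MF delta_formula by simp
  qed
  have c4: "minclade_prob n n = 1 / real (n - 1)"
  proof -
    have "minclade_prob n (n - 1 + 1) = ff (n - 1 - (n - 1)) / real (n - 1)"
      by (rule minclade_formula[OF n]) (use n in auto)
    moreover have "ff 0 = 1" unfolding ff_def by simp
    moreover have "n - 1 + 1 = n" using n by simp
    ultimately show ?thesis by simp
  qed
  have c5: "minclade_prob n (j + 1) = 1 / real j * measure_pmf.expectation (crp (n - 1 - j)) (\<lambda>\<sigma>. 1 / (1 + real (crp_K (n - 1 - j) \<sigma>)))"
    using MF KL by simp
  have c6: "measure_pmf.expectation (crp (n - 1 - j)) (\<lambda>\<sigma>. 1 / (1 + real (crp_K (n - 1 - j) \<sigma>))) =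
       measure_pmf.expectation (bern_seq (n - 1 - j)) (\<lambda>b. 1 / (1 + (\<Sum>i=1..n-1-j. (if b i then 1 else 0 :: real))))"
    using KL BL by simp
  show ?thesis using c1 c2 c3 c4 c5 c6 by blast
qed


end
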